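(* Let $1\le p<\infty$, let $d_{w,p}$ be a Lorentz sequence space, and let $X$ and $Y$ be closed subspaces of $d_{w,p}$. Then $\mathcal{FSS}(X,Y)=\mathcal{SS}(X,Y)$. In particular, $\mathcal{FSS}(\ell_p,d_{w,p})=\mathcal{SS}(\ell_p,d_{w,p})$ and $\mathcal{FSS}(d_{w,p})=\mathcal{SS}(d_{w,p})$.
   Context: Let $1\le p<\infty$ and let $w=(w_n)$ be a real sequence with $w_1=1$, $w_n\downarrow 0$ and $\sum_n w_n=\infty$. The Lorentz sequence space $d_{w,p}$ is the Banach space of all $x=(x_n)\in c_0$ with $\|x\|_{d_{w,p}}=\big(\sum_{n}w_n (x^*_n)^p\big)^{1/p}<\infty$, where $(x^*_n)$ is the non-increasing rearrangement of $(|x_n|)$. $\mathcal{SS}(X,Y)$ is the set of strictly singular operators $T\in L(X,Y)$: no restriction of $T$ to an infinite-dimensional closed subspace is an isomorphism. $\mathcal{FSS}(X,Y)$ is the set of finitely strictly singular operators: $T\in L(X,Y)$ such that for every $\varepsilon>0$ there is $N\in\mathbb N$ such that every subspace $Z\subseteq X$ with $\dim Z\ge N$ contains $z$ with $\|Tz\|<\varepsilon\|z\|$. *)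

theory Defs
  imports "HOL-Analysis.Analysis"
begin

text \<open>Sequences are functions nat => real, indexed from 0 (the paper's index n corresponds to n-1).\<close>

definition decr_rearr :: "(nat \<Rightarrow> real) \<Rightarrow> nat \<Rightarrow> real" where
  "decr_rearr x n = Inf {t. 0 \<le> t \<and> finite {k. \<bar>x k\<bar> > t} \<and> card {k. \<bar>x k\<bar> > t} \<le> n}"

definition lorentz_weight :: "(nat \<Rightarrow> real) \<Rightarrow> bool" where
  "lorentz_weight w \<longleftrightarrow> w 0 = 1 \<and> decseq w \<and> w \<longlonglongrightarrow> 0 \<and> \<not> summable w"

definition lorentz_space :: "(nat \<Rightarrow> real) \<Rightarrow> real \<Rightarrow> (nat \<Rightarrow> real) set" where
  "lorentz_space w p = {x. x \<longlonglongrightarrow> 0 \<and> summable (\<lambda>n. w n * decr_rearr x n powr p)}"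

definition lorentz_norm :: "(nat \<Rightarrow> real) \<Rightarrow> real \<Rightarrow> (nat \<Rightarrow> real) \<Rightarrow> real" where
  "lorentz_norm w p x = (\<Sum>n. w n * decr_rearr x n powr p) powr (1 / p)"

definition lp_space :: "real \<Rightarrow> (nat \<Rightarrow> real) set" where
  "lp_space p = {x. summable (\<lambda>n. \<bar>x n\<bar> powr p)}"

definition lp_norm :: "real \<Rightarrow> (nat \<Rightarrow> real) \<Rightarrow> real" where
  "lp_norm p x = (\<Sum>n. \<bar>x n\<bar> powr p) powr (1 / p)"

definition lin_subspace :: "(nat \<Rightarrow> real) set \<Rightarrow> bool" where
  "lin_subspace Z \<longleftrightarrow> (\<lambda>k. 0) \<in> Z \<and> (\<forall>x\<in>Z. \<forall>y\<in>Z. (\<lambda>k. x k + y k) \<in> Z)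
     \<and> (\<forall>c. \<forall>x\<in>Z. (\<lambda>k. c * x k) \<in> Z)"

definition norm_closed :: "((nat \<Rightarrow> real) \<Rightarrow> real) \<Rightarrow> (nat \<Rightarrow> real) set \<Rightarrow> (nat \<Rightarrow> real) set \<Rightarrow> bool" where
  "norm_closed N S Z \<longleftrightarrow> (\<forall>xs x. (\<forall>n. xs n \<in> Z) \<longrightarrow> x \<in> S \<longrightarrow>
      (\<lambda>n. N (\<lambda>k. xs n k - x k)) \<longlonglongrightarrow> 0 \<longrightarrow> x \<in> Z)"

definition closed_subspace_of :: "((nat \<Rightarrow> real) \<Rightarrow> real) \<Rightarrow> (nat \<Rightarrow> real) set \<Rightarrow> (nat \<Rightarrow> real) set \<Rightarrow> bool" where
  "closed_subspace_of N S Z \<longleftrightarrow> Z \<subseteq> S \<and> lin_subspace Z \<and> norm_closed N S Z"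

definition dim_at_least :: "(nat \<Rightarrow> real) set \<Rightarrow> nat \<Rightarrow> bool" where
  "dim_at_least Z n \<longleftrightarrow> (\<exists>f :: nat \<Rightarrow> nat \<Rightarrow> real. (\<forall>i<n. f i \<in> Z) \<and>
     (\<forall>c :: nat \<Rightarrow> real. (\<forall>k. (\<Sum>i<n. c i * f i k) = 0) \<longrightarrow> (\<forall>i<n. c i = 0)))"

definition infinite_dimensional :: "(nat \<Rightarrow> real) set \<Rightarrow> bool" where
  "infinite_dimensional Z \<longleftrightarrow> (\<forall>n. dim_at_least Z n)"

definition bounded_ops ::
  "((nat \<Rightarrow> real) \<Rightarrow> real) \<Rightarrow> ((nat \<Rightarrow> real) \<Rightarrow> real) \<Rightarrow> (nat \<Rightarrow> real) set \<Rightarrow> (nat \<Rightarrow> real) set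
    \<Rightarrow> ((nat \<Rightarrow> real) \<Rightarrow> (nat \<Rightarrow> real)) set" where
  "bounded_ops NX NY X Y = {T. (\<forall>x\<in>X. T x \<in> Y)
     \<and> (\<forall>x\<in>X. \<forall>y\<in>X. T (\<lambda>k. x k + y k) = (\<lambda>k. T x k + T y k))
     \<and> (\<forall>c. \<forall>x\<in>X. T (\<lambda>k. c * x k) = (\<lambda>k. c * T x k))
     \<and> (\<exists>C. \<forall>x\<in>X. NY (T x) \<le> C * NX x)}"

definition SS_ops ::
  "((nat \<Rightarrow> real) \<Rightarrow> real) \<Rightarrow> ((nat \<Rightarrow> real) \<Rightarrow> real) \<Rightarrow> (nat \<Rightarrow> real) set \<Rightarrow> (nat \<Rightarrow> real) set
    \<Rightarrow> ((nat \<Rightarrow> real) \<Rightarrow> (nat \<Rightarrow> real)) set" where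
  "SS_ops NX NY X Y = {T \<in> bounded_ops NX NY X Y.
     \<not> (\<exists>Z. closed_subspace_of NX X Z \<and> infinite_dimensional Z \<and>
            (\<exists>c>0. \<forall>z\<in>Z. c * NX z \<le> NY (T z)))}"

definition FSS_ops ::
  "((nat \<Rightarrow> real) \<Rightarrow> real) \<Rightarrow> ((nat \<Rightarrow> real) \<Rightarrow> real) \<Rightarrow> (nat \<Rightarrow> real) set \<Rightarrow> (nat \<Rightarrow> real) set
    \<Rightarrow> ((nat \<Rightarrow> real) \<Rightarrow> (nat \<Rightarrow> real)) set" where
  "FSS_ops NX NY X Y = {T \<in> bounded_ops NX NY X Y.
     \<forall>\<epsilon>>0. \<exists>N. \<forall>Z. Z \<subseteq> X \<and> lin_subspace Z \<and> dim_at_least Z N \<longrightarrow>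
        (\<exists>z\<in>Z. NY (T z) < \<epsilon> * NX z)}"

end

theory Submission
  imports Defs
begin


definition DS :: "(nat \<Rightarrow> real) \<Rightarrow> nat \<Rightarrow> real set" where
  "DS x n = {t. 0 \<le> t \<and> finite {k. \<bar>x k\<bar> > t} \<and> card {k. \<bar>x k\<bar> > t} \<le> n}"

lemma dr_def2: "decr_rearr x n = Inf (DS x n)"
  unfolding decr_rearr_def DS_def by simp

lemma DS_bdd: "bdd_below (DS x n)"
  unfolding DS_def by (auto intro: bdd_belowI[where m=0])

lemma c0_bound: fixes x :: "nat \<Rightarrow> real" assumes "x \<longlonglongrightarrow> 0" shows "\<exists>B\<ge>0. \<forall>k. \<bar>x k\<bar> \<le> B"
proof -
  have "Bseq x" using assms by (intro convergent_imp_Bseq) (auto simp: convergent_def)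
  then obtain B where "B > 0" "\<forall>k. norm (x k) \<le> B" by (auto simp: Bseq_def)
  thus ?thesis by (intro exI[of _ B]) auto
qed

lemma DS_ne: assumes "x \<longlonglongrightarrow> 0" shows "DS x n \<noteq> {}"
proof -
  obtain B where B: "B \<ge> 0" "\<forall>k. \<bar>x k\<bar> \<le> B" using c0_bound[OF assms] by blast
  have "{k. \<bar>x k\<bar> > B} = {}" using B by (auto simp: not_less)
  hence "B \<in> DS x n" using B unfolding DS_def by simp
  thus ?thesis by blast
qed

lemma dr_le: "t \<in> DS x n \<Longrightarrow> decr_rearr x n \<le> t"
  unfolding dr_def2 by (rule cInf_lower[OF _ DS_bdd])

lemma dr_ge: "DS x n \<noteq> {} \<Longrightarrow> (\<And>t. t \<in> DS x n \<Longrightarrow> s \<le> t) \<Longrightarrow> s \<le> decr_rearr x n"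
  unfolding dr_def2 by (rule cInf_greatest)

lemma dr_nonneg: "x \<longlonglongrightarrow> 0 \<Longrightarrow> 0 \<le> decr_rearr x n"
  by (rule dr_ge[OF DS_ne]) (auto simp: DS_def)

lemma c0_finite: fixes x :: "nat \<Rightarrow> real" assumes "x \<longlonglongrightarrow> 0" "t > 0" shows "finite {k. \<bar>x k\<bar> > t}"
proof -
  obtain N where N: "\<forall>k\<ge>N. \<bar>x k\<bar> < t" using LIMSEQ_D[OF assms] by auto
  have "{k. \<bar>x k\<bar> > t} \<subseteq> {..<N}"
  proof
    fix k assume "k \<in> {k. \<bar>x k\<bar> > t}"
    thus "k \<in> {..<N}" using N by (metis lessThan_iff mem_Collect_eq not_le order.asym)
  qed
  thus ?thesis by (rule finite_subset) simp
qed

lemma dr_mono: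
  assumes "x \<longlonglongrightarrow> 0" "\<And>k. \<bar>y k\<bar> \<le> \<bar>x k\<bar>"
  shows "decr_rearr y n \<le> decr_rearr x n"
proof (rule dr_ge[OF DS_ne[OF assms(1)]])
  fix t assume t: "t \<in> DS x n"
  have sub: "{k. \<bar>y k\<bar> > t} \<subseteq> {k. \<bar>x k\<bar> > t}" using assms(2) by (auto intro: order.strict_trans2)
  have fx: "finite {k. \<bar>x k\<bar> > t}" and cx: "card {k. \<bar>x k\<bar> > t} \<le> n" "0 \<le> t" using t unfolding DS_def by auto
  have fy: "finite {k. \<bar>y k\<bar> > t}" by (rule finite_subset[OF sub fx])
  have "card {k. \<bar>y k\<bar> > t} \<le> n" using card_mono[OF fx sub] cx by linarith
  hence "t \<in> DS y n" using fy cx unfolding DS_def by blast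
  thus "decr_rearr y n \<le> t" by (rule dr_le)
qed

lemma dr_antimono:
  assumes "x \<longlonglongrightarrow> 0" "m \<le> n" shows "decr_rearr x n \<le> decr_rearr x m"
proof (rule dr_ge[OF DS_ne[OF assms(1)]])
  fix t assume "t \<in> DS x m"
  hence "t \<in> DS x n" using assms(2) unfolding DS_def by auto
  thus "decr_rearr x n \<le> t" by (rule dr_le)
qed

lemma dr_zero_fun: "decr_rearr (\<lambda>k. 0) n = 0"
proof -
  have "0 \<in> DS (\<lambda>k. 0) n" unfolding DS_def by simp
  hence "decr_rearr (\<lambda>k. 0) n \<le> 0" by (rule dr_le)
  moreover have "0 \<le> decr_rearr (\<lambda>k. 0) n" by (rule dr_nonneg) simp
  ultimately show ?thesis by simp
qed

lemma dr_scale_le: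
  assumes "x \<longlonglongrightarrow> 0" "c \<noteq> 0"
  shows "decr_rearr (\<lambda>k. c * x k) n \<le> \<bar>c\<bar> * decr_rearr x n"
proof -
  have "decr_rearr (\<lambda>k. c * x k) n / \<bar>c\<bar> \<le> decr_rearr x n"
  proof (rule dr_ge[OF DS_ne[OF assms(1)]])
    fix t assume t: "t \<in> DS x n"
    have eq: "{k. \<bar>c * x k\<bar> > \<bar>c\<bar> * t} = {k. \<bar>x k\<bar> > t}"
      using assms(2) by (auto simp: abs_mult)
    have "\<bar>c\<bar> * t \<in> DS (\<lambda>k. c * x k) n" using t eq unfolding DS_def by auto
    hence "decr_rearr (\<lambda>k. c * x k) n \<le> \<bar>c\<bar> * t" by (rule dr_le)
    thus "decr_rearr (\<lambda>k. c * x k) n / \<bar>c\<bar> \<le> t" using assms(2)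
      by (simp add: divide_le_eq mult.commute)
  qed
  thus ?thesis using assms(2) by (simp add: divide_le_eq mult.commute)
qed

lemma dr_scale:
  assumes "x \<longlonglongrightarrow> 0"
  shows "decr_rearr (\<lambda>k. c * x k) n = \<bar>c\<bar> * decr_rearr x n"
proof (cases "c = 0")
  case True thus ?thesis using dr_zero_fun by simp
next
  case False
  have cx: "(\<lambda>k. c * x k) \<longlonglongrightarrow> 0" using tendsto_mult_right_zero[OF assms] by simp
  have "decr_rearr x n = decr_rearr (\<lambda>k. (1/c) * (c * x k)) n" using False by simp
  also have "\<dots> \<le> \<bar>1/c\<bar> * decr_rearr (\<lambda>k. c * x k) n"
    by (rule dr_scale_le[OF cx]) (use False in simp)
  finally have "\<bar>c\<bar> * decr_rearr x n \<le> decr_rearr (\<lambda>k. c * x k) n"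
    using False by (simp add: field_simps)
  with dr_scale_le[OF assms False, of n] show ?thesis by linarith
qed

lemma dr_subadd:
  assumes "x \<longlonglongrightarrow> 0" "y \<longlonglongrightarrow> 0"
  shows "decr_rearr (\<lambda>k. x k + y k) (m + n) \<le> decr_rearr x m + decr_rearr y n"
proof -
  have key: "decr_rearr (\<lambda>k. x k + y k) (m + n) \<le> t1 + t2" if t1: "t1 \<in> DS x m" and t2: "t2 \<in> DS y n" for t1 t2
  proof -
    have sub: "{k. \<bar>x k + y k\<bar> > t1 + t2} \<subseteq> {k. \<bar>x k\<bar> > t1} \<union> {k. \<bar>y k\<bar> > t2}" by force
    have f: "finite ({k. \<bar>x k\<bar> > t1} \<union> {k. \<bar>y k\<bar> > t2})" using t1 t2 unfolding DS_def by auto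
    have "card {k. \<bar>x k + y k\<bar> > t1 + t2} \<le> card ({k. \<bar>x k\<bar> > t1} \<union> {k. \<bar>y k\<bar> > t2})"
      by (rule card_mono[OF f sub])
    also have "\<dots> \<le> card {k. \<bar>x k\<bar> > t1} + card {k. \<bar>y k\<bar> > t2}" by (rule card_Un_le)
    also have "\<dots> \<le> m + n" using t1 t2 unfolding DS_def by auto
    finally have cd: "card {k. \<bar>x k + y k\<bar> > t1 + t2} \<le> m + n" .
    have fs: "finite {k. \<bar>x k + y k\<bar> > t1 + t2}" by (rule finite_subset[OF sub f])
    have "0 \<le> t1 + t2" using t1 t2 unfolding DS_def by auto
    hence "t1 + t2 \<in> DS (\<lambda>k. x k + y k) (m+n)" using cd fs unfolding DS_def by blast
    thus ?thesis by (rule dr_le)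
  qed
  have "decr_rearr (\<lambda>k. x k + y k) (m + n) - decr_rearr x m \<le> decr_rearr y n"
  proof (rule dr_ge[OF DS_ne[OF assms(2)]])
    fix t2 assume t2: "t2 \<in> DS y n"
    have "decr_rearr (\<lambda>k. x k + y k) (m + n) - t2 \<le> decr_rearr x m"
    proof (rule dr_ge[OF DS_ne[OF assms(1)]])
      fix t1 assume "t1 \<in> DS x m"
      from key[OF this t2] show "decr_rearr (\<lambda>k. x k + y k) (m + n) - t2 \<le> t1" by simp
    qed
    thus "decr_rearr (\<lambda>k. x k + y k) (m + n) - decr_rearr x m \<le> t2" by simp
  qed
  thus ?thesis by simp
qed

lemma dr_peaks:
  assumes "x \<longlonglongrightarrow> 0" "finite I" "j < card I" "\<And>k. k \<in> I \<Longrightarrow> s \<le> \<bar>x k\<bar>"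
  shows "s \<le> decr_rearr x j"
proof (rule dr_ge[OF DS_ne[OF assms(1)]])
  fix t assume t: "t \<in> DS x j"
  show "s \<le> t"
  proof (rule ccontr)
    assume "\<not> s \<le> t"
    hence sub: "I \<subseteq> {k. \<bar>x k\<bar> > t}" using assms(4) by (auto simp: not_le intro: order.strict_trans2)
    have ft: "finite {k. \<bar>x k\<bar> > t}" "card {k. \<bar>x k\<bar> > t} \<le> j" using t unfolding DS_def by auto
    have "card I \<le> card {k. \<bar>x k\<bar> > t}" by (rule card_mono[OF ft(1) sub])
    thus False using ft assms(3) by linarith
  qed
qed

lemma dr_sup: assumes "x \<longlonglongrightarrow> 0" shows "\<bar>x k\<bar> \<le> decr_rearr x 0"
  by (rule dr_peaks[OF assms, of "{k}"]) auto

lemma dr_fin_zero: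
  assumes "finite S" "\<And>k. k \<notin> S \<Longrightarrow> x k = 0" "card S \<le> j"
  shows "decr_rearr x j = 0"
proof -
  have "{k. \<bar>x k\<bar> > 0} \<subseteq> S" using assms(2) by force
  hence "0 \<in> DS x j" using assms unfolding DS_def
    by (auto intro: finite_subset dest: card_mono[OF assms(1)])
  hence "decr_rearr x j \<le> 0" by (rule dr_le)
  moreover have "x \<longlonglongrightarrow> 0"
  proof -
    have "finite S" by fact
    then obtain N where "\<forall>k\<in>S. k < N" by (metis finite_nat_bounded lessThan_iff subset_eq)
    hence "\<forall>k\<ge>N. x k = 0" using assms(2) by (meson not_le)
    thus ?thesis by (intro LIMSEQ_I) (auto intro!: exI[of _ N])
  qed
  hence "0 \<le> decr_rearr x j" by (rule dr_nonneg)
  ultimately show ?thesis by simp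
qed

lemma sorted_enum:
  fixes x :: "nat \<Rightarrow> real"
  assumes "finite S"
  shows "\<exists>e. bij_betw e {..<card S} S \<and> (\<forall>i j. i \<le> j \<longrightarrow> j < card S \<longrightarrow> \<bar>x (e j)\<bar> \<le> \<bar>x (e i)\<bar>)"
proof -
  define L where "L = sort_key (\<lambda>k. - \<bar>x k\<bar>) (sorted_list_of_set S)"
  have d: "distinct L" and s: "set L = S" using assms by (auto simp: L_def)
  have len: "length L = card S" using distinct_card[OF d] s by simp
  have b: "bij_betw ((!) L) {..<card S} S" by (rule bij_betw_nth) (use d s len in auto)
  have srt: "sorted (map (\<lambda>k. - \<bar>x k\<bar>) L)" unfolding L_def by simp
  have "\<bar>x (L ! j)\<bar> \<le> \<bar>x (L ! i)\<bar>" if "i \<le> j" "j < card S" for i j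
    using sorted_nth_mono[OF srt, of i j] that len by simp
  thus ?thesis using b by blast
qed

lemma dr_enum:
  assumes S: "finite S" and z: "\<And>k. k \<notin> S \<Longrightarrow> x k = 0"
    and e: "bij_betw e {..<card S} S" and srt: "\<And>i j. i \<le> j \<Longrightarrow> j < card S \<Longrightarrow> \<bar>x (e j)\<bar> \<le> \<bar>x (e i)\<bar>"
    and j: "j < card S"
  shows "decr_rearr x j = \<bar>x (e j)\<bar>"
proof -
  have x0: "x \<longlonglongrightarrow> 0"
  proof -
    obtain N where "\<forall>k\<in>S. k < N" using S by (metis finite_nat_bounded lessThan_iff subset_eq)
    hence "\<forall>k\<ge>N. x k = 0" using z by (meson not_le)
    thus ?thesis by (intro LIMSEQ_I) (auto intro!: exI[of _ N])
  qed
  have sub: "{k. \<bar>x k\<bar> > \<bar>x (e j)\<bar>} \<subseteq> e ` {..<j}"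
  proof
    fix k assume k: "k \<in> {k. \<bar>x k\<bar> > \<bar>x (e j)\<bar>}"
    hence "k \<in> S" using z by force
    then obtain i where i: "i < card S" "e i = k" using e unfolding bij_betw_def by (metis imageE lessThan_iff)
    have "i < j" using srt[of j i] k i j by (cases "j \<le> i") auto
    thus "k \<in> e ` {..<j}" using i by auto
  qed
  have "card {k. \<bar>x k\<bar> > \<bar>x (e j)\<bar>} \<le> card (e ` {..<j})" by (rule card_mono) (use sub in auto)
  also have "\<dots> \<le> j" using card_image_le[of "{..<j}" e] by simp
  finally have "\<bar>x (e j)\<bar> \<in> DS x j" unfolding DS_def using sub by (auto intro: finite_subset)
  hence le: "decr_rearr x j \<le> \<bar>x (e j)\<bar>" by (rule dr_le)
  have inj: "inj_on e {..j}" using e j by (auto simp: bij_betw_def intro: inj_on_subset)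
  have "card (e ` {..j}) = Suc j" using card_image[OF inj] by simp
  hence "\<bar>x (e j)\<bar> \<le> decr_rearr x j"
    by (intro dr_peaks[OF x0, of "e ` {..j}"]) (use srt j in auto)
  with le show ?thesis by simp
qed


lemma RI_aux:
  fixes v g :: "nat \<Rightarrow> real"
  shows "\<And>J \<rho> v g. finite J \<Longrightarrow> card J = n \<Longrightarrow> inj_on \<rho> J \<Longrightarrow>
    (\<forall>a b. a \<le> b \<longrightarrow> v b \<le> v a) \<Longrightarrow> (\<forall>i. 0 \<le> v i) \<Longrightarrow>
    (\<forall>a b. a \<le> b \<longrightarrow> g b \<le> g a) \<Longrightarrow> (\<forall>i. 0 \<le> (g::nat\<Rightarrow>real) i) \<Longrightarrow>
    (\<Sum>j\<in>J. (v::nat\<Rightarrow>real) (\<rho> j) * g j) \<le> (\<Sum>j<n. v j * g j)"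
proof (induction n)
  case 0 thus ?case by simp
next
  case (Suc n J \<rho> v g)
  note fin = Suc.prems(1) and cJ = Suc.prems(2) and inj = Suc.prems(3)
  note vd = Suc.prems(4) and vp = Suc.prems(5) and gd = Suc.prems(6) and gp = Suc.prems(7)
  have ne: "J \<noteq> {}" using cJ by auto
  define j0 where "j0 = Min J"
  have j0J: "j0 \<in> J" unfolding j0_def using fin ne by simp
  have j0min: "\<And>j. j \<in> J \<Longrightarrow> j0 \<le> j" unfolding j0_def using fin by simp
  define r where "r = Min (\<rho> ` J)"
  have "r \<in> \<rho> ` J" unfolding r_def using fin ne by simp
  then obtain j1 where j1J: "j1 \<in> J" and rj1: "\<rho> j1 = r" by auto
  have rmin: "\<And>j. j \<in> J \<Longrightarrow> r \<le> \<rho> j" unfolding r_def using fin by simp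
  define \<rho>' where "\<rho>' = (\<lambda>j. if j = j0 then \<rho> j1 else if j = j1 then \<rho> j0 else \<rho> j)"
  have step1: "(\<Sum>j\<in>J. v (\<rho> j) * g j) \<le> (\<Sum>j\<in>J. v (\<rho>' j) * g j)"
  proof (cases "j0 = j1")
    case True
    hence "\<And>j. \<rho>' j = \<rho> j" unfolding \<rho>'_def by auto
    thus ?thesis by simp
  next
    case False
    have A: "(\<Sum>j\<in>J. F j) = F j0 + F j1 + (\<Sum>j\<in>J - {j0} - {j1}. F j)" for F :: "nat \<Rightarrow> real"
      using fin j0J j1J False by (simp add: sum.remove[of J j0] sum.remove[of "J - {j0}" j1] algebra_simps)
    have rest: "(\<Sum>j\<in>J - {j0} - {j1}. v (\<rho> j) * g j) = (\<Sum>j\<in>J - {j0} - {j1}. v (\<rho>' j) * g j)"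
      by (rule sum.cong) (auto simp: \<rho>'_def)
    have "v (\<rho> j0) \<le> v (\<rho> j1)" using vd rmin[OF j0J] rj1 by auto
    moreover have "g j1 \<le> g j0" using gd j0min[OF j1J] by auto
    ultimately have "0 \<le> (v (\<rho> j1) - v (\<rho> j0)) * (g j0 - g j1)" by simp
    hence "v (\<rho> j0) * g j0 + v (\<rho> j1) * g j1 \<le> v (\<rho>' j0) * g j0 + v (\<rho>' j1) * g j1"
      using False by (simp add: \<rho>'_def algebra_simps)
    thus ?thesis using A[of "\<lambda>j. v (\<rho> j) * g j"] A[of "\<lambda>j. v (\<rho>' j) * g j"] rest by linarith
  qed
  define J' where "J' = J - {j0}"
  have finJ': "finite J'" and cJ': "card J' = n" using fin cJ j0J by (auto simp: J'_def)
  have split: "(\<Sum>j\<in>J. v (\<rho>' j) * g j) = v (\<rho>' j0) * g j0 + (\<Sum>j\<in>J'. v (\<rho>' j) * g j)"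
    unfolding J'_def using fin j0J by (simp add: sum.remove)
  have first: "v (\<rho>' j0) * g j0 \<le> v 0 * g 0"
    using vd gd vp gp by (intro mult_mono) auto
  have J'ge: "\<And>j. j \<in> J' \<Longrightarrow> 1 \<le> j"
  proof -
    fix j assume "j \<in> J'"
    hence "j \<in> J" "j \<noteq> j0" by (auto simp: J'_def)
    thus "1 \<le> j" using j0min[of j] by simp
  qed
  have inj': "inj_on \<rho>' J"
  proof (rule inj_onI)
    fix a b assume ab: "a \<in> J" "b \<in> J" "\<rho>' a = \<rho>' b"
    show "a = b" using ab inj j0J j1J unfolding \<rho>'_def by (auto split: if_splits dest: inj_onD)
  qed
  have \<rho>'ge: "\<And>j. j \<in> J' \<Longrightarrow> 1 \<le> \<rho>' j"
  proof -
    fix j assume jJ': "j \<in> J'"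
    hence jJ: "j \<in> J" and jn: "j \<noteq> j0" by (auto simp: J'_def)
    have "\<rho>' j \<noteq> \<rho>' j0" using inj_onD[OF inj' _ jJ j0J] jn by auto
    moreover have "\<rho>' j0 = r" using rj1 by (simp add: \<rho>'_def)
    moreover have "r \<le> \<rho>' j" using rmin jJ j0J j1J by (auto simp: \<rho>'_def)
    ultimately show "1 \<le> \<rho>' j" by linarith
  qed
  define h where "h = (\<lambda>j::nat. j - 1)"
  define J'' where "J'' = h ` J'"
  define \<rho>'' where "\<rho>'' = (\<lambda>i. \<rho>' (i + 1) - 1)"
  have injh: "inj_on h J'"
  proof (rule inj_onI)
    fix a b assume "a \<in> J'" "b \<in> J'" "h a = h b"
    with J'ge[of a] J'ge[of b] show "a = b" by (simp add: h_def)
  qed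
  have reidx: "(\<Sum>j\<in>J'. v (\<rho>' j) * g j) = (\<Sum>i\<in>J''. v (\<rho>'' i + 1) * g (i + 1))"
  proof -
    have "(\<Sum>i\<in>J''. v (\<rho>'' i + 1) * g (i + 1)) = (\<Sum>j\<in>J'. v (\<rho>'' (h j) + 1) * g (h j + 1))"
      unfolding J''_def by (rule sum.reindex[OF injh, unfolded comp_def])
    also have "\<dots> = (\<Sum>j\<in>J'. v (\<rho>' j) * g j)"
    proof (rule sum.cong[OF refl])
      fix j assume "j \<in> J'"
      have j1: "h j + 1 = j" using J'ge[OF \<open>j \<in> J'\<close>] by (simp add: h_def)
      have "\<rho>'' (h j) + 1 = \<rho>' j" using \<rho>'ge[OF \<open>j \<in> J'\<close>] j1 by (simp add: \<rho>''_def)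
      note j1 this
      thus "v (\<rho>'' (h j) + 1) * g (h j + 1) = v (\<rho>' j) * g j" by simp
    qed
    finally show ?thesis by simp
  qed
  have finJ'': "finite J''" unfolding J''_def using finJ' by simp
  have cJ'': "card J'' = n" unfolding J''_def using card_image[OF injh] cJ' by simp
  have inj'': "inj_on \<rho>'' J''"
  proof (rule inj_onI)
    fix a b assume ab: "a \<in> J''" "b \<in> J''" "\<rho>'' a = \<rho>'' b"
    then obtain a' b' where a': "a' \<in> J'" "a = a' - 1" and b': "b' \<in> J'" "b = b' - 1"
      unfolding J''_def h_def by auto
    have "a + 1 = a'" "b + 1 = b'" using a' b' J'ge by force+
    hence "\<rho>' a' = \<rho>' b'" using ab(3) \<rho>'ge[OF a'(1)] \<rho>'ge[OF b'(1)] unfolding \<rho>''_def by auto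
    hence "a' = b'" using inj_onD[OF inj'] a'(1) b'(1) by (auto simp: J'_def)
    thus "a = b" using a' b' by simp
  qed
  have IH: "(\<Sum>i\<in>J''. v (\<rho>'' i + 1) * g (i + 1)) \<le> (\<Sum>i<n. v (i+1) * g (i+1))"
    using Suc.IH[OF finJ'' cJ'' inj'', of "\<lambda>i. v (i+1)" "\<lambda>i. g (i+1)"] vd vp gd gp by auto
  have "(\<Sum>j\<in>J. v (\<rho> j) * g j) \<le> v 0 * g 0 + (\<Sum>i<n. v (i+1) * g (i+1))"
    using step1 split first reidx IH by linarith
  also have "\<dots> = (\<Sum>j<Suc n. v j * g j)" by (subst sum.lessThan_Suc_shift) simp
  finally show ?case .
qed

lemma RI:
  fixes v g :: "nat \<Rightarrow> real"
  assumes "finite J" "inj_on \<rho> J" "\<And>a b. a \<le> b \<Longrightarrow> v b \<le> v a" "\<And>i. 0 \<le> v i"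
    "\<And>a b. a \<le> b \<Longrightarrow> g b \<le> g a" "\<And>i. 0 \<le> g i"
  shows "(\<Sum>j\<in>J. v (\<rho> j) * g j) \<le> (\<Sum>j<card J. v j * g j)"
  using RI_aux[OF assms(1) refl assms(2)] assms(3-6) by blast


definition Phi :: "(nat \<Rightarrow> real) \<Rightarrow> real \<Rightarrow> (nat \<Rightarrow> real) \<Rightarrow> real" where
  "Phi w p x = (\<Sum>n. w n * decr_rearr x n powr p)"

lemma lw_facts:
  assumes "lorentz_weight w"
  shows "w 0 = 1" "\<And>a b. a \<le> b \<Longrightarrow> w b \<le> w a" "\<And>n. 0 \<le> w n" "\<And>n. w n \<le> 1"
proof -
  have d: "decseq w" and l: "w \<longlonglongrightarrow> 0" and w0: "w 0 = 1" using assms by (auto simp: lorentz_weight_def)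
  show "w 0 = 1" by fact
  show "\<And>a b. a \<le> b \<Longrightarrow> w b \<le> w a" using d by (auto simp: decseq_def)
  show "\<And>n. 0 \<le> w n" using decseq_ge[OF d l] by simp
  show "\<And>n. w n \<le> 1" using d w0 unfolding decseq_def by (metis zero_le)
qed

lemma fs_c0:
  fixes x :: "nat \<Rightarrow> real"
  assumes "finite S" "\<And>k. k \<notin> S \<Longrightarrow> x k = 0"
  shows "x \<longlonglongrightarrow> 0"
proof -
  obtain N where "\<forall>k\<in>S. k < N" using assms(1) by (metis finite_nat_bounded lessThan_iff subset_eq)
  hence "\<forall>k\<ge>N. x k = 0" using assms(2) by (meson not_le)
  thus ?thesis by (intro LIMSEQ_I) (auto intro!: exI[of _ N])
qed

lemma Phi_fin:
  fixes w x y :: "nat \<Rightarrow> real"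
  assumes p: "p > 0" and S: "finite S" and z: "\<And>k. k \<notin> S \<Longrightarrow> x k = 0"
  shows "Phi w p x = (\<Sum>j<card S. w j * decr_rearr x j powr p)"
  unfolding Phi_def
  by (rule suminf_finite) (use dr_fin_zero[where x=x, OF S z] p in auto)

lemma Phi_enum:
  fixes w x y :: "nat \<Rightarrow> real"
  assumes p: "p > 0" and S: "finite S" and z: "\<And>k. k \<notin> S \<Longrightarrow> x k = 0"
  shows "\<exists>\<sigma> e. bij_betw \<sigma> S {..<card S} \<and> bij_betw e {..<card S} S \<and> (\<forall>k\<in>S. e (\<sigma> k) = k)
     \<and> (\<forall>j<card S. decr_rearr x j = \<bar>x (e j)\<bar>)
     \<and> Phi w p x = (\<Sum>k\<in>S. w (\<sigma> k) * \<bar>x k\<bar> powr p)"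
proof -
  obtain e where e: "bij_betw e {..<card S} S" and srt: "\<forall>i j. i \<le> j \<longrightarrow> j < card S \<longrightarrow> \<bar>x (e j)\<bar> \<le> \<bar>x (e i)\<bar>"
    using sorted_enum[OF S, of x] by blast
  define \<sigma> where "\<sigma> = inv_into {..<card S} e"
  have \<sigma>: "bij_betw \<sigma> S {..<card S}" unfolding \<sigma>_def by (rule bij_betw_inv_into[OF e])
  have e\<sigma>: "\<forall>k\<in>S. e (\<sigma> k) = k" unfolding \<sigma>_def using e
    by (auto simp: bij_betw_def intro: f_inv_into_f)
  have dr: "\<forall>j<card S. decr_rearr x j = \<bar>x (e j)\<bar>"
    using dr_enum[where x=x, OF S z e] srt by blast
  have "Phi w p x = (\<Sum>j<card S. w j * decr_rearr x j powr p)" by (rule Phi_fin[where x=x, OF p S z])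
  also have "\<dots> = (\<Sum>j<card S. w j * \<bar>x (e j)\<bar> powr p)" using dr by (intro sum.cong) auto
  also have "\<dots> = (\<Sum>k\<in>S. w (\<sigma> k) * \<bar>x (e (\<sigma> k))\<bar> powr p)"
    by (rule sum.reindex_bij_betw[OF \<sigma>, symmetric])
  also have "\<dots> = (\<Sum>k\<in>S. w (\<sigma> k) * \<bar>x k\<bar> powr p)" using e\<sigma> by simp
  finally show ?thesis using \<sigma> e e\<sigma> dr by blast
qed

lemma Phi_ge_pairing:
  fixes w x y :: "nat \<Rightarrow> real"
  assumes w: "lorentz_weight w" and p: "p > 0" and S: "finite S" and z: "\<And>k. k \<notin> S \<Longrightarrow> x k = 0"
    and A: "finite A" and \<pi>: "inj_on \<pi> A"
  shows "(\<Sum>k\<in>A. w (\<pi> k) * \<bar>x k\<bar> powr p) \<le> Phi w p x"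
proof -
  obtain \<sigma> e where \<sigma>: "bij_betw \<sigma> S {..<card S}" and e: "bij_betw e {..<card S} S"
    and e\<sigma>: "\<forall>k\<in>S. e (\<sigma> k) = k" and dr: "\<forall>j<card S. decr_rearr x j = \<bar>x (e j)\<bar>"
    and Ph: "Phi w p x = (\<Sum>k\<in>S. w (\<sigma> k) * \<bar>x k\<bar> powr p)"
    using Phi_enum[where x=x and w=w, OF p S z] by blast
  note wf = lw_facts[OF w]
  have x0: "x \<longlonglongrightarrow> 0" by (rule fs_c0[where x=x, OF S z])
  define g where "g = (\<lambda>j. decr_rearr x j powr p)"
  have gd: "\<And>a b. a \<le> b \<Longrightarrow> g b \<le> g a" unfolding g_def
    using dr_antimono[OF x0] dr_nonneg[OF x0] p by (auto intro: powr_mono2)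
  have gp: "\<And>i. 0 \<le> g i" unfolding g_def by simp
  have "(\<Sum>k\<in>A. w (\<pi> k) * \<bar>x k\<bar> powr p) = (\<Sum>k\<in>A \<inter> S. w (\<pi> k) * \<bar>x k\<bar> powr p)"
    by (rule sum.mono_neutral_right) (use A z p in auto)
  also have "\<dots> = (\<Sum>j\<in>\<sigma> ` (A \<inter> S). w (\<pi> (e j)) * \<bar>x (e j)\<bar> powr p)"
  proof -
    have inj: "inj_on \<sigma> (A \<inter> S)" using \<sigma> by (auto simp: bij_betw_def intro: inj_on_subset)
    show ?thesis by (subst sum.reindex[OF inj]) (use e\<sigma> in auto)
  qed
  also have "\<dots> = (\<Sum>j\<in>\<sigma> ` (A \<inter> S). w (\<pi> (e j)) * g j)"
  proof (rule sum.cong[OF refl])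
    fix j assume "j \<in> \<sigma> ` (A \<inter> S)"
    hence "j < card S" using \<sigma> by (auto simp: bij_betw_def)
    thus "w (\<pi> (e j)) * \<bar>x (e j)\<bar> powr p = w (\<pi> (e j)) * g j" using dr by (simp add: g_def)
  qed
  also have "\<dots> \<le> (\<Sum>j<card (\<sigma> ` (A \<inter> S)). w j * g j)"
  proof (rule RI)
    show "finite (\<sigma> ` (A \<inter> S))" using A by simp
    show "inj_on (\<lambda>j. \<pi> (e j)) (\<sigma> ` (A \<inter> S))"
    proof (rule inj_onI)
      fix a b assume a: "a \<in> \<sigma> ` (A \<inter> S)" and b: "b \<in> \<sigma> ` (A \<inter> S)" and ab: "\<pi> (e a) = \<pi> (e b)"
      obtain ka where ka: "ka \<in> A \<inter> S" "a = \<sigma> ka" using a by auto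
      obtain kb where kb: "kb \<in> A \<inter> S" "b = \<sigma> kb" using b by auto
      have "e a = ka" "e b = kb" using ka kb e\<sigma> by auto
      hence "ka = kb" using ab ka kb inj_onD[OF \<pi>] by auto
      thus "a = b" using ka kb by simp
    qed
  qed (use wf gd gp in auto)
  also have "\<dots> \<le> (\<Sum>j<card S. w j * g j)"
  proof (rule sum_mono2)
    have "card (\<sigma> ` (A \<inter> S)) \<le> card (A \<inter> S)" by (rule card_image_le) (use A in simp)
    also have "\<dots> \<le> card S" by (rule card_mono[OF S]) auto
    finally show "{..<card (\<sigma> ` (A \<inter> S))} \<subseteq> {..<card S}" by auto
  qed (use wf gp in auto)
  also have "\<dots> = Phi w p x" using Phi_fin[where x=x and w=w, OF p S z] by (simp add: g_def)
  finally show ?thesis .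
qed

lemma powr_disj:
  fixes a b :: real assumes "a = 0 \<or> b = 0" "p > 0"
  shows "\<bar>a + b\<bar> powr p = \<bar>a\<bar> powr p + \<bar>b\<bar> powr p"
  using assms by auto

lemma Phi_disj:
  fixes w x y :: "nat \<Rightarrow> real"
  assumes w: "lorentz_weight w" and p: "p > 0"
    and Sx: "finite Sx" and zx: "\<And>k. k \<notin> Sx \<Longrightarrow> x k = 0"
    and Sy: "finite Sy" and zy: "\<And>k. k \<notin> Sy \<Longrightarrow> y k = 0"
    and d: "\<And>k. x k = 0 \<or> y k = 0"
  shows "Phi w p (\<lambda>k. x k + y k) \<le> Phi w p x + Phi w p y"
proof -
  define S where "S = Sx \<union> Sy"
  have S: "finite S" using Sx Sy by (simp add: S_def)
  have z: "\<And>k. k \<notin> S \<Longrightarrow> x k + y k = 0" using zx zy by (auto simp: S_def)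
  obtain \<sigma> where \<sigma>: "bij_betw \<sigma> S {..<card S}"
    and Ph: "Phi w p (\<lambda>k. x k + y k) = (\<Sum>k\<in>S. w (\<sigma> k) * \<bar>x k + y k\<bar> powr p)"
    using Phi_enum[where x="\<lambda>k. x k + y k" and w=w, OF p S z] by blast
  have inj: "inj_on \<sigma> S" using \<sigma> by (simp add: bij_betw_def)
  have "Phi w p (\<lambda>k. x k + y k) = (\<Sum>k\<in>S. w (\<sigma> k) * \<bar>x k\<bar> powr p) + (\<Sum>k\<in>S. w (\<sigma> k) * \<bar>y k\<bar> powr p)"
    unfolding Ph sum.distrib[symmetric] using powr_disj[OF d p] by (simp add: algebra_simps)
  also have "\<dots> \<le> Phi w p x + Phi w p y"
  proof (rule add_mono)
    show "(\<Sum>k\<in>S. w (\<sigma> k) * \<bar>x k\<bar> powr p) \<le> Phi w p x"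
      by (rule Phi_ge_pairing[where x=x, OF w p Sx zx S inj])
    show "(\<Sum>k\<in>S. w (\<sigma> k) * \<bar>y k\<bar> powr p) \<le> Phi w p y"
      by (rule Phi_ge_pairing[where x=y, OF w p Sy zy S inj])
  qed
  finally show ?thesis .
qed

lemma telescope_w:
  fixes w :: "nat \<Rightarrow> real"
  assumes "\<And>a b. a \<le> b \<Longrightarrow> w b \<le> w a" "\<And>n. 0 \<le> w n"
  shows "(\<Sum>j<n. w j - w (j + m)) \<le> (\<Sum>j<m. w j)"
proof -
  have "(\<Sum>j<n. w j - w (j + m)) = (\<Sum>j<m. w j) - (\<Sum>j<m. w (j + n))"
  proof (induction n)
    case 0 thus ?case by simp
  next
    case (Suc n)
    have t: "(\<Sum>j<m. w (j + n) - w (Suc j + n)) = w (0 + n) - w (m + n)"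
      by (rule sum_lessThan_telescope'[of "\<lambda>j. w (j + n)"])
    have "(\<Sum>j<m. w (j + n)) - (\<Sum>j<m. w (j + Suc n)) = w n - w (n + m)"
      using t by (simp add: sum_subtractf add.commute)
    thus ?case using Suc by simp
  qed
  also have "\<dots> \<le> (\<Sum>j<m. w j)" using assms(2) by (simp add: sum_nonneg)
  finally show ?thesis .
qed

lemma Phi_lower_block:
  fixes w x y :: "nat \<Rightarrow> real"
  assumes w: "lorentz_weight w" and p: "p > 0"
    and Sx: "finite Sx" "Sx \<subseteq> {..<m}" and zx: "\<And>k. k \<notin> Sx \<Longrightarrow> x k = 0"
    and Sy: "finite Sy" "Sy \<subseteq> {m..}" and zy: "\<And>k. k \<notin> Sy \<Longrightarrow> y k = 0"
    and s: "\<And>k. \<bar>y k\<bar> powr p \<le> s"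
  shows "Phi w p x + Phi w p y - real m * s \<le> Phi w p (\<lambda>k. x k + y k)"
proof -
  note wf = lw_facts[OF w]
  obtain \<sigma>x where \<sigma>x: "bij_betw \<sigma>x Sx {..<card Sx}"
    and Phx: "Phi w p x = (\<Sum>k\<in>Sx. w (\<sigma>x k) * \<bar>x k\<bar> powr p)"
    using Phi_enum[where x=x and w=w, OF p Sx(1) zx] by blast
  obtain \<sigma>y where \<sigma>y: "bij_betw \<sigma>y Sy {..<card Sy}"
    and Phy: "Phi w p y = (\<Sum>k\<in>Sy. w (\<sigma>y k) * \<bar>y k\<bar> powr p)"
    using Phi_enum[where x=y and w=w, OF p Sy(1) zy] by blast
  have cSx: "card Sx \<le> m" using card_mono[OF _ Sx(2)] by simp
  define \<pi> where "\<pi> = (\<lambda>k. if k < m then \<sigma>x k else \<sigma>y k + m)"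
  define S where "S = Sx \<union> Sy"
  have S: "finite S" using Sx Sy by (simp add: S_def)
  have disj: "Sx \<inter> Sy = {}" using Sx(2) Sy(2) by (meson atLeast_iff disjoint_iff lessThan_iff not_le subsetD)
  have inj: "inj_on \<pi> S"
  proof (rule inj_onI)
    fix a b assume a: "a \<in> S" and b: "b \<in> S" and ab: "\<pi> a = \<pi> b"
    have lt: "\<sigma>x k < m" if "k \<in> Sx" for k
    proof -
      have "\<sigma>x k \<in> {..<card Sx}" using that \<sigma>x by (auto simp: bij_betw_def)
      thus ?thesis using cSx by simp
    qed
    consider "a \<in> Sx" "b \<in> Sx" | "a \<in> Sx" "b \<in> Sy" | "a \<in> Sy" "b \<in> Sx" | "a \<in> Sy" "b \<in> Sy"
      using a b by (auto simp: S_def)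
    thus "a = b"
    proof cases
      case 1
      have "a < m" "b < m" using 1 Sx(2) by auto
      hence "\<sigma>x a = \<sigma>x b" using ab by (simp add: \<pi>_def)
      thus ?thesis using 1 \<sigma>x by (auto simp: bij_betw_def dest: inj_onD)
    next
      case 2
      have "a < m" "\<not> b < m" using 2 Sx(2) Sy(2) by auto
      hence "\<pi> a < m" "m \<le> \<pi> b" using lt[OF 2(1)] by (auto simp: \<pi>_def)
      thus ?thesis using ab by simp
    next
      case 3
      have "b < m" "\<not> a < m" using 3 Sx(2) Sy(2) by auto
      hence "\<pi> b < m" "m \<le> \<pi> a" using lt[OF 3(2)] by (auto simp: \<pi>_def)
      thus ?thesis using ab by simp
    next
      case 4
      have "\<not> a < m" "\<not> b < m" using 4 Sy(2) by auto
      hence "\<sigma>y a = \<sigma>y b" using ab by (simp add: \<pi>_def)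
      thus ?thesis using 4 \<sigma>y by (auto simp: bij_betw_def dest: inj_onD)
    qed
  qed
  have zs: "\<And>k. k \<notin> S \<Longrightarrow> x k + y k = 0" using zx zy by (auto simp: S_def)
  have "(\<Sum>k\<in>S. w (\<pi> k) * \<bar>x k + y k\<bar> powr p) \<le> Phi w p (\<lambda>k. x k + y k)"
    by (rule Phi_ge_pairing[where x="\<lambda>k. x k + y k", OF w p S zs S inj])
  moreover have "(\<Sum>k\<in>S. w (\<pi> k) * \<bar>x k + y k\<bar> powr p)
      = (\<Sum>k\<in>Sx. w (\<pi> k) * \<bar>x k + y k\<bar> powr p) + (\<Sum>k\<in>Sy. w (\<pi> k) * \<bar>x k + y k\<bar> powr p)"
    unfolding S_def by (rule sum.union_disjoint) (use Sx Sy disj in auto)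
  moreover have "(\<Sum>k\<in>Sx. w (\<pi> k) * \<bar>x k + y k\<bar> powr p) = Phi w p x"
    unfolding Phx
  proof (rule sum.cong[OF refl])
    fix k assume k: "k \<in> Sx"
    hence "k < m" "k \<notin> Sy" using Sx(2) disj by auto
    thus "w (\<pi> k) * \<bar>x k + y k\<bar> powr p = w (\<sigma>x k) * \<bar>x k\<bar> powr p" using zy by (simp add: \<pi>_def)
  qed
  moreover have "(\<Sum>k\<in>Sy. w (\<pi> k) * \<bar>x k + y k\<bar> powr p) = (\<Sum>k\<in>Sy. w (\<sigma>y k + m) * \<bar>y k\<bar> powr p)"
  proof (rule sum.cong[OF refl])
    fix k assume k: "k \<in> Sy"
    hence "\<not> k < m" "k \<notin> Sx" using Sy(2) disj by auto
    thus "w (\<pi> k) * \<bar>x k + y k\<bar> powr p = w (\<sigma>y k + m) * \<bar>y k\<bar> powr p" using zx by (simp add: \<pi>_def)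
  qed
  moreover have "Phi w p y - (\<Sum>k\<in>Sy. w (\<sigma>y k + m) * \<bar>y k\<bar> powr p) \<le> real m * s"
  proof -
    have "Phi w p y - (\<Sum>k\<in>Sy. w (\<sigma>y k + m) * \<bar>y k\<bar> powr p)
        = (\<Sum>k\<in>Sy. (w (\<sigma>y k) - w (\<sigma>y k + m)) * \<bar>y k\<bar> powr p)"
      unfolding Phy sum_subtractf[symmetric] by (simp add: algebra_simps)
    also have "\<dots> \<le> (\<Sum>k\<in>Sy. (w (\<sigma>y k) - w (\<sigma>y k + m)) * s)"
      by (rule sum_mono, rule mult_left_mono[OF s]) (use wf in auto)
    also have "\<dots> = (\<Sum>j<card Sy. (w j - w (j + m)) * s)"
      by (rule sum.reindex_bij_betw[OF \<sigma>y])
    also have "\<dots> = (\<Sum>j<card Sy. (w j - w (j + m))) * s"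
      by (simp add: sum_distrib_right)
    also have "\<dots> \<le> (\<Sum>j<m. w j) * s"
    proof (rule mult_right_mono)
      show "(\<Sum>j<card Sy. w j - w (j + m)) \<le> sum w {..<m}" by (rule telescope_w) (use wf in auto)
      have "0 \<le> \<bar>y 0\<bar> powr p" by simp
      thus "0 \<le> s" using s[of 0] by linarith
    qed
    also have "\<dots> \<le> real m * s"
    proof (rule mult_right_mono)
      have "(\<Sum>j<m. w j) \<le> (\<Sum>j<m. 1)" by (rule sum_mono) (use wf in auto)
      thus "(\<Sum>j<m. w j) \<le> real m" by simp
      have "0 \<le> \<bar>y 0\<bar> powr p" by simp
      thus "0 \<le> s" using s[of 0] by linarith
    qed
    finally show ?thesis .
  qed
  ultimately show ?thesis by linarith
qed


lemma lsp_D: "x \<in> lorentz_space w p \<Longrightarrow> x \<longlonglongrightarrow> 0"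
  and lsp_summ: "x \<in> lorentz_space w p \<Longrightarrow> summable (\<lambda>n. w n * decr_rearr x n powr p)"
  unfolding lorentz_space_def by auto

lemma Phi_nonneg:
  assumes w: "lorentz_weight w" and x: "x \<in> lorentz_space w p"
  shows "0 \<le> Phi w p x"
  unfolding Phi_def using lsp_summ[OF x] lw_facts(3)[OF w] by (intro suminf_nonneg) auto

lemma Phi_sup:
  assumes w: "lorentz_weight w" and p: "p > 0" and x: "x \<in> lorentz_space w p"
  shows "\<bar>x k\<bar> powr p \<le> Phi w p x"
proof -
  have "\<bar>x k\<bar> powr p \<le> decr_rearr x 0 powr p"
    by (rule powr_mono2) (use p dr_sup[OF lsp_D[OF x]] in auto)
  also have "\<dots> = (\<Sum>n\<in>{0}. w n * decr_rearr x n powr p)" using lw_facts(1)[OF w] by simp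
  also have "\<dots> \<le> Phi w p x" unfolding Phi_def
    by (rule sum_le_suminf[OF lsp_summ[OF x]]) (use lw_facts(3)[OF w] in auto)
  finally show ?thesis .
qed

lemma Phi_mono:
  assumes w: "lorentz_weight w" and p: "p > 0" and x: "x \<in> lorentz_space w p"
    and le: "\<And>k. \<bar>y k\<bar> \<le> \<bar>x k\<bar>"
  shows "y \<in> lorentz_space w p \<and> Phi w p y \<le> Phi w p x"
proof -
  have x0: "x \<longlonglongrightarrow> 0" by (rule lsp_D[OF x])
  have y0: "y \<longlonglongrightarrow> 0"
    by (rule Lim_null_comparison[of _ "\<lambda>k. \<bar>x k\<bar>"]) (use le x0 tendsto_rabs_zero in auto)
  have t: "\<And>n. norm (w n * decr_rearr y n powr p) \<le> w n * decr_rearr x n powr p"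
    using lw_facts(3)[OF w] dr_mono[OF x0 le] dr_nonneg[OF y0] p
    by (auto intro!: mult_left_mono powr_mono2)
  have s: "summable (\<lambda>n. w n * decr_rearr y n powr p)"
    by (rule summable_comparison_test'[OF lsp_summ[OF x] t])
  have "Phi w p y \<le> Phi w p x" unfolding Phi_def
    by (rule suminf_le[OF _ s lsp_summ[OF x]]) (use t in \<open>metis abs_le_D1 real_norm_def\<close>)
  thus ?thesis using s y0 unfolding lorentz_space_def by auto
qed

lemma Phi_scale:
  assumes w: "lorentz_weight w" and p: "p > 0" and x: "x \<in> lorentz_space w p"
  shows "(\<lambda>k. c * x k) \<in> lorentz_space w p \<and> Phi w p (\<lambda>k. c * x k) = \<bar>c\<bar> powr p * Phi w p x"
proof -
  have x0: "x \<longlonglongrightarrow> 0" by (rule lsp_D[OF x])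
  have eq: "(\<lambda>n. w n * decr_rearr (\<lambda>k. c * x k) n powr p) = (\<lambda>n. \<bar>c\<bar> powr p * (w n * decr_rearr x n powr p))"
    using dr_scale[OF x0] dr_nonneg[OF x0] by (auto simp: powr_mult)
  have c0: "(\<lambda>k. c * x k) \<longlonglongrightarrow> 0" using tendsto_mult_right_zero[OF x0] by simp
  have s: "summable (\<lambda>n. w n * decr_rearr (\<lambda>k. c * x k) n powr p)"
    by (subst eq) (rule summable_mult[OF lsp_summ[OF x]])
  have "Phi w p (\<lambda>k. c * x k) = (\<Sum>n. \<bar>c\<bar> powr p * (w n * decr_rearr x n powr p))"
    unfolding Phi_def by (subst eq) (rule refl)
  also have "\<dots> = \<bar>c\<bar> powr p * Phi w p x" unfolding Phi_def by (rule suminf_mult[OF lsp_summ[OF x]])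
  finally show ?thesis using s c0 unfolding lorentz_space_def by auto
qed

lemma double_sum:
  fixes h :: "nat \<Rightarrow> real"
  shows "(\<Sum>k<2*N. h (k div 2)) = 2 * (\<Sum>n<N. h n)"
proof (induction N)
  case 0 thus ?case by simp
next
  case (Suc N)
  have "2 * Suc N = Suc (Suc (2 * N))" by simp
  hence "(\<Sum>k<2*Suc N. h (k div 2)) = (\<Sum>k<2*N. h (k div 2)) + h ((2*N) div 2) + h (Suc (2*N) div 2)"
    by simp
  also have "\<dots> = 2 * (\<Sum>n<N. h n) + 2 * h N" using Suc by simp
  finally show ?case by simp
qed

lemma powr_sum_le:
  fixes a b p :: real assumes "0 \<le> a" "0 \<le> b" "p > 0"
  shows "(a + b) powr p \<le> 2 powr p * (a powr p + b powr p)"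
proof -
  have "(a + b) powr p \<le> (2 * max a b) powr p"
    by (rule powr_mono2) (use assms in auto)
  also have "\<dots> = 2 powr p * max a b powr p" using assms by (simp add: powr_mult)
  also have "\<dots> \<le> 2 powr p * (a powr p + b powr p)"
    by (rule mult_left_mono) (auto simp: max_def)
  finally show ?thesis .
qed

lemma Phi_qtri:
  assumes w: "lorentz_weight w" and p: "p > 0" and x: "x \<in> lorentz_space w p" and y: "y \<in> lorentz_space w p"
  shows "(\<lambda>k. x k + y k) \<in> lorentz_space w p \<and>
     Phi w p (\<lambda>k. x k + y k) \<le> 2 powr (p + 1) * (Phi w p x + Phi w p y)"
proof -
  note wf = lw_facts[OF w]
  have x0: "x \<longlonglongrightarrow> 0" by (rule lsp_D[OF x])
  have y0: "y \<longlonglongrightarrow> 0" by (rule lsp_D[OF y])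
  have s0: "(\<lambda>k. x k + y k) \<longlonglongrightarrow> 0" using tendsto_add_zero[OF x0 y0] .
  define f where "f = (\<lambda>k. w k * decr_rearr (\<lambda>k. x k + y k) k powr p)"
  define h where "h = (\<lambda>n. 2 powr p * (w n * decr_rearr x n powr p + w n * decr_rearr y n powr p))"
  have hs: "summable h" unfolding h_def
    by (intro summable_mult summable_add lsp_summ[OF x] lsp_summ[OF y])
  have hsum: "suminf h = 2 powr p * (Phi w p x + Phi w p y)" unfolding h_def Phi_def
    using suminf_mult[OF summable_add[OF lsp_summ[OF x] lsp_summ[OF y]]]
      suminf_add[OF lsp_summ[OF x] lsp_summ[OF y]] by simp
  have hp: "\<And>n. 0 \<le> h n" unfolding h_def using wf(3) by simp
  have fp: "\<And>k. 0 \<le> f k" unfolding f_def using wf(3) by simp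
  have fh: "f k \<le> h (k div 2)" for k
  proof -
    define n where "n = k div 2"
    have "decr_rearr (\<lambda>k. x k + y k) k \<le> decr_rearr (\<lambda>k. x k + y k) (n + n)"
      by (rule dr_antimono[OF s0]) (simp add: n_def)
    also have "\<dots> \<le> decr_rearr x n + decr_rearr y n" by (rule dr_subadd[OF x0 y0])
    finally have le1: "decr_rearr (\<lambda>k. x k + y k) k \<le> decr_rearr x n + decr_rearr y n" .
    have "decr_rearr (\<lambda>k. x k + y k) k powr p \<le> (decr_rearr x n + decr_rearr y n) powr p"
      by (rule powr_mono2) (use p le1 dr_nonneg[OF s0] in auto)
    also have "\<dots> \<le> 2 powr p * (decr_rearr x n powr p + decr_rearr y n powr p)"
      by (rule powr_sum_le) (use dr_nonneg[OF x0] dr_nonneg[OF y0] p in auto)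
    finally have le2: "decr_rearr (\<lambda>k. x k + y k) k powr p \<le> 2 powr p * (decr_rearr x n powr p + decr_rearr y n powr p)" .
    have wk: "w k \<le> w n" using wf(2) by (simp add: n_def)
    have "f k \<le> w n * (2 powr p * (decr_rearr x n powr p + decr_rearr y n powr p))"
      unfolding f_def by (rule mult_mono[OF wk le2]) (use wf(3) in auto)
    thus ?thesis unfolding h_def n_def by (simp add: algebra_simps)
  qed
  have part: "(\<Sum>k<N. f k) \<le> 2 * suminf h" for N
  proof -
    have "(\<Sum>k<N. f k) \<le> (\<Sum>k<2*N. f k)" by (rule sum_mono2) (use fp in auto)
    also have "\<dots> \<le> (\<Sum>k<2*N. h (k div 2))" by (rule sum_mono) (rule fh)
    also have "\<dots> = 2 * (\<Sum>n<N. h n)" by (rule double_sum)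
    also have "\<dots> \<le> 2 * suminf h" using sum_le_suminf[OF hs, of "{..<N}"] hp by simp
    finally show ?thesis .
  qed
  have fs: "summable f" by (rule summableI_nonneg_bounded[OF fp part])
  have "suminf f \<le> 2 * suminf h" by (rule suminf_le_const[OF fs part])
  also have "\<dots> = 2 powr (p + 1) * (Phi w p x + Phi w p y)" unfolding hsum by (simp add: powr_add)
  finally show ?thesis using fs s0 unfolding lorentz_space_def Phi_def f_def by auto
qed

lemma Phi_tail:
  assumes w: "lorentz_weight w" and p: "p > 0" and x: "x \<in> lorentz_space w p"
  shows "(\<lambda>M. Phi w p (\<lambda>k. if M \<le> k then x k else 0)) \<longlonglongrightarrow> 0"
proof (rule LIMSEQ_I)
  fix r :: real assume r: "0 < r"
  note wf = lw_facts[OF w]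
  have x0: "x \<longlonglongrightarrow> 0" by (rule lsp_D[OF x])
  define a where "a = (\<lambda>j. w j * decr_rearr x j powr p)"
  have as: "summable a" unfolding a_def by (rule lsp_summ[OF x])
  have ap: "\<And>j. 0 \<le> a j" unfolding a_def using wf(3) by simp
  obtain J where J: "\<forall>n\<ge>J. norm (\<Sum>i. a (i + n)) < r/2" using suminf_exist_split[OF _ as, of "r/2"] r by auto
  define \<tau> where "\<tau> = (r / (2 * (real J + 1))) powr (1/p)"
  have \<tau>pos: "0 < \<tau>" unfolding \<tau>_def using r by simp
  have \<tau>p: "\<tau> powr p = r / (2 * (real J + 1))" unfolding \<tau>_def using r p by (simp add: powr_powr)
  obtain M where M: "\<forall>k\<ge>M. norm (x k - 0) < \<tau>" using LIMSEQ_D[OF x0 \<tau>pos] by auto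
  show "\<exists>no. \<forall>n\<ge>no. norm (Phi w p (\<lambda>k. if n \<le> k then x k else 0) - 0) < r"
  proof (intro exI allI impI)
    fix n assume n: "M \<le> n"
    define y where "y = (\<lambda>k. if n \<le> k then x k else 0)"
    have yle: "\<And>k. \<bar>y k\<bar> \<le> \<bar>x k\<bar>" unfolding y_def by auto
    have ysp: "y \<in> lorentz_space w p" using Phi_mono[OF w p x yle] by simp
    have y0: "y \<longlonglongrightarrow> 0" by (rule lsp_D[OF ysp])
    have ytau: "decr_rearr y j \<le> \<tau>" for j
    proof (rule dr_le)
      have "\<bar>y k\<bar> \<le> \<tau>" for k
      proof (cases "n \<le> k")
        case True thus ?thesis using M n unfolding y_def by (auto intro: less_imp_le)
      next
        case False thus ?thesis using \<tau>pos unfolding y_def by auto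
      qed
      hence "{k. \<bar>y k\<bar> > \<tau>} = {}" by (auto simp: not_less)
      thus "\<tau> \<in> DS y j" unfolding DS_def using \<tau>pos by simp
    qed
    define c where "c = (\<lambda>j. if j < J then \<tau> powr p else a j)"
    have bc: "w j * decr_rearr y j powr p \<le> c j" for j
    proof (cases "j < J")
      case True
      have "w j * decr_rearr y j powr p \<le> 1 * \<tau> powr p"
        by (rule mult_mono) (use wf p ytau dr_nonneg[OF y0] in \<open>auto intro: powr_mono2\<close>)
      thus ?thesis using True by (simp add: c_def)
    next
      case False
      have "w j * decr_rearr y j powr p \<le> w j * decr_rearr x j powr p"
        by (rule mult_left_mono) (use wf p dr_mono[OF x0 yle] dr_nonneg[OF y0] in \<open>auto intro: powr_mono2\<close>)
      thus ?thesis using False by (simp add: c_def a_def)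
    qed
    have cs: "summable c"
    proof -
      have "summable (\<lambda>j. c (j + J))" unfolding c_def using as by simp
      thus ?thesis by simp
    qed
    have "Phi w p y \<le> suminf c" unfolding Phi_def
      by (rule suminf_le[OF bc lsp_summ[OF ysp] cs])
    also have "\<dots> = (\<Sum>j. c (j + J)) + (\<Sum>j<J. c j)" by (rule suminf_split_initial_segment[OF cs])
    also have "\<dots> = (\<Sum>j. a (j + J)) + real J * \<tau> powr p" by (simp add: c_def)
    also have "\<dots> < r/2 + r/2"
    proof (rule add_less_le_mono)
      show "(\<Sum>j. a (j + J)) < r/2" using J by auto
      have "real J * \<tau> powr p = r/2 * (real J / (real J + 1))" unfolding \<tau>p by (simp add: field_simps)
      also have "\<dots> \<le> r/2 * 1" by (rule mult_left_mono) (use r in auto)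
      finally show "real J * \<tau> powr p \<le> r/2" by simp
    qed
    finally have "Phi w p y < r" by simp
    moreover have "0 \<le> Phi w p y" by (rule Phi_nonneg[OF w ysp])
    ultimately show "norm (Phi w p (\<lambda>k. if n \<le> k then x k else 0) - 0) < r" unfolding y_def by simp
  qed
qed

lemma Phi_peaks:
  assumes w: "lorentz_weight w" and p: "p > 0" and x: "x \<in> lorentz_space w p"
    and I: "finite I" "r \<le> card I" and s: "0 \<le> s" "\<And>k. k \<in> I \<Longrightarrow> s \<le> \<bar>x k\<bar>"
  shows "s powr p * (\<Sum>j<r. w j) \<le> Phi w p x"
proof -
  note wf = lw_facts[OF w]
  have x0: "x \<longlonglongrightarrow> 0" by (rule lsp_D[OF x])
  have "s powr p * (\<Sum>j<r. w j) = (\<Sum>j<r. w j * s powr p)" by (simp add: sum_distrib_left mult.commute)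
  also have "\<dots> \<le> (\<Sum>j<r. w j * decr_rearr x j powr p)"
  proof (rule sum_mono)
    fix j assume "j \<in> {..<r}"
    hence "s \<le> decr_rearr x j" using dr_peaks[OF x0 I(1), of j s] I(2) s(2) by auto
    thus "w j * s powr p \<le> w j * decr_rearr x j powr p"
      by (intro mult_left_mono powr_mono2) (use p s wf in auto)
  qed
  also have "\<dots> \<le> Phi w p x" unfolding Phi_def
    by (rule sum_le_suminf[OF lsp_summ[OF x]]) (use wf(3) in auto)
  finally show ?thesis .
qed


locale dom_space =
  fixes E :: "(nat \<Rightarrow> real) set" and \<Phi> :: "(nat \<Rightarrow> real) \<Rightarrow> real" and p :: real
  assumes p1: "1 \<le> p"
  and zero_in: "(\<lambda>k. 0) \<in> E"
  and nonneg: "x \<in> E \<Longrightarrow> 0 \<le> \<Phi> x"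
  and scale: "x \<in> E \<Longrightarrow> (\<lambda>k. c * x k) \<in> E \<and> \<Phi> (\<lambda>k. c * x k) = \<bar>c\<bar> powr p * \<Phi> x"
  and qtri: "x \<in> E \<Longrightarrow> y \<in> E \<Longrightarrow> (\<lambda>k. x k + y k) \<in> E \<and> \<Phi> (\<lambda>k. x k + y k) \<le> 2 powr (p+1) * (\<Phi> x + \<Phi> y)"
  and sup: "x \<in> E \<Longrightarrow> \<bar>x k\<bar> powr p \<le> \<Phi> x"
  and mono: "x \<in> E \<Longrightarrow> (\<And>k. \<bar>y k\<bar> \<le> \<bar>x k\<bar>) \<Longrightarrow> y \<in> E \<and> \<Phi> y \<le> \<Phi> x"
  and tail: "x \<in> E \<Longrightarrow> (\<lambda>M. \<Phi> (\<lambda>k. if M \<le> k then x k else 0)) \<longlonglongrightarrow> 0"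
  and disj: "x \<in> E \<Longrightarrow> y \<in> E \<Longrightarrow> finite Sx \<Longrightarrow> (\<And>k. k \<notin> Sx \<Longrightarrow> x k = 0) \<Longrightarrow>
     finite Sy \<Longrightarrow> (\<And>k. k \<notin> Sy \<Longrightarrow> y k = 0) \<Longrightarrow> (\<And>k. x k = 0 \<or> y k = 0) \<Longrightarrow>
     \<Phi> (\<lambda>k. x k + y k) \<le> \<Phi> x + \<Phi> y"

lemma zero_lsp: "(\<lambda>k. 0) \<in> lorentz_space w p"
  unfolding lorentz_space_def using dr_zero_fun by simp

lemma lorentz_dom:
  assumes w: "lorentz_weight w" and p: "1 \<le> p"
  shows "dom_space (lorentz_space w p) (Phi w p) p"
proof -
  have p0: "p > 0" using p by simp
  show ?thesis
  proof
    show "1 \<le> p" by fact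
    show "(\<lambda>k. 0) \<in> lorentz_space w p" by (rule zero_lsp)
    show "0 \<le> Phi w p x" if "x \<in> lorentz_space w p" for x by (rule Phi_nonneg[OF w that])
    show "(\<lambda>k. c * x k) \<in> lorentz_space w p \<and> Phi w p (\<lambda>k. c * x k) = \<bar>c\<bar> powr p * Phi w p x"
      if "x \<in> lorentz_space w p" for x c by (rule Phi_scale[OF w p0 that])
    show "(\<lambda>k. x k + y k) \<in> lorentz_space w p \<and> Phi w p (\<lambda>k. x k + y k) \<le> 2 powr (p + 1) * (Phi w p x + Phi w p y)"
      if "x \<in> lorentz_space w p" "y \<in> lorentz_space w p" for x y by (rule Phi_qtri[OF w p0 that])
    show "\<bar>x k\<bar> powr p \<le> Phi w p x" if "x \<in> lorentz_space w p" for x k by (rule Phi_sup[OF w p0 that])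
    show "y \<in> lorentz_space w p \<and> Phi w p y \<le> Phi w p x"
      if "x \<in> lorentz_space w p" "\<And>k. \<bar>y k\<bar> \<le> \<bar>x k\<bar>" for x y by (rule Phi_mono[OF w p0 that])
    show "(\<lambda>M. Phi w p (\<lambda>k. if M \<le> k then x k else 0)) \<longlonglongrightarrow> 0"
      if "x \<in> lorentz_space w p" for x by (rule Phi_tail[OF w p0 that])
    show "Phi w p (\<lambda>k. x k + y k) \<le> Phi w p x + Phi w p y"
      if "finite Sx" "\<And>k. k \<notin> Sx \<Longrightarrow> x k = 0" "finite Sy" "\<And>k. k \<notin> Sy \<Longrightarrow> y k = 0"
         "\<And>k. x k = 0 \<or> y k = 0" for x y Sx Sy
      by (rule Phi_disj[OF w p0 that])
  qed
qed

definition Psi :: "real \<Rightarrow> (nat \<Rightarrow> real) \<Rightarrow> real" where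
  "Psi p x = (\<Sum>n. \<bar>x n\<bar> powr p)"

lemma lp_dom:
  assumes p: "1 \<le> p"
  shows "dom_space (lp_space p) (Psi p) p"
proof -
  have p0: "p > 0" using p by simp
  have summ: "x \<in> lp_space p \<Longrightarrow> summable (\<lambda>n. \<bar>x n\<bar> powr p)" for x by (simp add: lp_space_def)
  have mono: "y \<in> lp_space p \<and> Psi p y \<le> Psi p x" if x: "x \<in> lp_space p" and le: "\<And>k. \<bar>y k\<bar> \<le> \<bar>x k\<bar>" for x y
  proof -
    have t: "\<And>n. norm (\<bar>y n\<bar> powr p) \<le> \<bar>x n\<bar> powr p" using le p0 by (auto intro: powr_mono2)
    have s: "summable (\<lambda>n. \<bar>y n\<bar> powr p)" by (rule summable_comparison_test'[OF summ[OF x] t])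
    have "Psi p y \<le> Psi p x" unfolding Psi_def
      by (rule suminf_le[OF _ s summ[OF x]]) (use le p0 in \<open>auto intro: powr_mono2\<close>)
    thus ?thesis using s by (simp add: lp_space_def)
  qed
  show ?thesis
  proof
    show "1 \<le> p" by fact
    show "(\<lambda>k. 0) \<in> lp_space p" by (simp add: lp_space_def)
    show "0 \<le> Psi p x" if "x \<in> lp_space p" for x
      unfolding Psi_def by (rule suminf_nonneg[OF summ[OF that]]) simp
    show "(\<lambda>k. c * x k) \<in> lp_space p \<and> Psi p (\<lambda>k. c * x k) = \<bar>c\<bar> powr p * Psi p x" if x: "x \<in> lp_space p" for x c
    proof -
      have eq: "(\<lambda>n. \<bar>c * x n\<bar> powr p) = (\<lambda>n. \<bar>c\<bar> powr p * \<bar>x n\<bar> powr p)" by (simp add: abs_mult powr_mult)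
      have s: "summable (\<lambda>n. \<bar>c * x n\<bar> powr p)" by (subst eq) (rule summable_mult[OF summ[OF x]])
      have "Psi p (\<lambda>k. c * x k) = (\<Sum>n. \<bar>c\<bar> powr p * \<bar>x n\<bar> powr p)" unfolding Psi_def by (subst eq) (rule refl)
      also have "\<dots> = \<bar>c\<bar> powr p * Psi p x" unfolding Psi_def by (rule suminf_mult[OF summ[OF x]])
      finally show ?thesis using s by (simp add: lp_space_def)
    qed
    show "(\<lambda>k. x k + y k) \<in> lp_space p \<and> Psi p (\<lambda>k. x k + y k) \<le> 2 powr (p + 1) * (Psi p x + Psi p y)"
      if x: "x \<in> lp_space p" and y: "y \<in> lp_space p" for x y
    proof -
      have t: "\<bar>x n + y n\<bar> powr p \<le> 2 powr (p+1) * (\<bar>x n\<bar> powr p + \<bar>y n\<bar> powr p)" for n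
      proof -
        have "\<bar>x n + y n\<bar> powr p \<le> (\<bar>x n\<bar> + \<bar>y n\<bar>) powr p" by (rule powr_mono2) (use p0 in auto)
        also have "\<dots> \<le> 2 powr p * (\<bar>x n\<bar> powr p + \<bar>y n\<bar> powr p)" by (rule powr_sum_le) (use p0 in auto)
        also have "\<dots> \<le> 2 powr (p+1) * (\<bar>x n\<bar> powr p + \<bar>y n\<bar> powr p)"
          by (rule mult_right_mono) (auto simp: powr_add)
        finally show ?thesis .
      qed
      have sg: "summable (\<lambda>n. 2 powr (p+1) * (\<bar>x n\<bar> powr p + \<bar>y n\<bar> powr p))"
        by (intro summable_mult summable_add summ x y)
      have s: "summable (\<lambda>n. \<bar>x n + y n\<bar> powr p)"
        by (rule summable_comparison_test'[OF sg]) (use t in auto)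
      have "Psi p (\<lambda>k. x k + y k) \<le> (\<Sum>n. 2 powr (p+1) * (\<bar>x n\<bar> powr p + \<bar>y n\<bar> powr p))"
        unfolding Psi_def by (rule suminf_le[OF t s sg])
      also have "\<dots> = 2 powr (p + 1) * (Psi p x + Psi p y)" unfolding Psi_def
        using suminf_mult[OF summable_add[OF summ[OF x] summ[OF y]]] suminf_add[OF summ[OF x] summ[OF y]] by simp
      finally show ?thesis using s by (simp add: lp_space_def)
    qed
    show "\<bar>x k\<bar> powr p \<le> Psi p x" if x: "x \<in> lp_space p" for x k
    proof -
      have "(\<Sum>n\<in>{k}. \<bar>x n\<bar> powr p) \<le> Psi p x" unfolding Psi_def
        by (rule sum_le_suminf[OF summ[OF x]]) auto
      thus ?thesis by simp
    qed
    show "y \<in> lp_space p \<and> Psi p y \<le> Psi p x" if "x \<in> lp_space p" "\<And>k. \<bar>y k\<bar> \<le> \<bar>x k\<bar>" for x y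
      using mono[OF that] .
    show "(\<lambda>M. Psi p (\<lambda>k. if M \<le> k then x k else 0)) \<longlonglongrightarrow> 0" if x: "x \<in> lp_space p" for x
    proof -
      have eq: "Psi p (\<lambda>k. if M \<le> k then x k else 0) = (\<Sum>n. \<bar>x n\<bar> powr p) - (\<Sum>n<M. \<bar>x n\<bar> powr p)" for M
      proof -
        define f where "f = (\<lambda>n. \<bar>if M \<le> n then x n else 0\<bar> powr p)"
        have fs: "summable f" unfolding f_def using mono[OF x, of "\<lambda>k. if M \<le> k then x k else 0"]
          by (auto simp: lp_space_def)
        have a: "suminf f = (\<Sum>n. f (n + M)) + (\<Sum>n<M. f n)" by (rule suminf_split_initial_segment[OF fs])
        have b: "(\<Sum>n<M. f n) = 0" unfolding f_def using p0 by simp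
        have c: "(\<Sum>n. f (n + M)) = (\<Sum>n. \<bar>x (n + M)\<bar> powr p)" unfolding f_def by simp
        have d: "(\<Sum>n. \<bar>x n\<bar> powr p) = (\<Sum>n. \<bar>x (n + M)\<bar> powr p) + (\<Sum>n<M. \<bar>x n\<bar> powr p)"
          by (rule suminf_split_initial_segment[OF summ[OF x]])
        show ?thesis unfolding Psi_def using a b c d by (simp add: f_def)
      qed
      have "(\<lambda>M. (\<Sum>n<M. \<bar>x n\<bar> powr p)) \<longlonglongrightarrow> (\<Sum>n. \<bar>x n\<bar> powr p)"
        by (rule summable_LIMSEQ[OF summ[OF x]])
      hence "(\<lambda>M. (\<Sum>n. \<bar>x n\<bar> powr p) - (\<Sum>n<M. \<bar>x n\<bar> powr p)) \<longlonglongrightarrow> (\<Sum>n. \<bar>x n\<bar> powr p) - (\<Sum>n. \<bar>x n\<bar> powr p)"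
        by (intro tendsto_diff tendsto_const)
      thus ?thesis unfolding eq by simp
    qed
    show "Psi p (\<lambda>k. x k + y k) \<le> Psi p x + Psi p y"
      if x: "x \<in> lp_space p" and y: "y \<in> lp_space p" and d: "\<And>k. x k = 0 \<or> y k = 0" for x y and Sx Sy :: "nat set"
    proof -
      have eq: "(\<lambda>n. \<bar>x n + y n\<bar> powr p) = (\<lambda>n. \<bar>x n\<bar> powr p + \<bar>y n\<bar> powr p)"
        using powr_disj[OF d p0] by auto
      show ?thesis unfolding Psi_def eq using suminf_add[OF summ[OF x] summ[OF y]] by simp
    qed
  qed
qed


lemma skip_sum:
  fixes F :: "nat \<Rightarrow> real"
  assumes "i0 < n"
  shows "(\<Sum>k<n. F k) = F i0 + (\<Sum>i<n - 1. F (if i < i0 then i else Suc i))"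
proof -
  define s where "s = (\<lambda>i::nat. if i < i0 then i else Suc i)"
  have inj: "inj_on s {..<n - 1}" by (rule inj_onI) (auto simp: s_def split: if_splits)
  have img: "s ` {..<n - 1} = {..<n} - {i0}"
  proof
    show "s ` {..<n - 1} \<subseteq> {..<n} - {i0}" using assms by (auto simp: s_def)
    show "{..<n} - {i0} \<subseteq> s ` {..<n - 1}"
    proof
      fix k assume k: "k \<in> {..<n} - {i0}"
      show "k \<in> s ` {..<n - 1}"
      proof (cases "k < i0")
        case True
        hence "s k = k" "k < n - 1" using assms by (auto simp: s_def)
        thus ?thesis by (metis imageI lessThan_iff)
      next
        case False
        hence "k > i0" using k by auto
        hence "s (k - 1) = k" "k - 1 < n - 1" using k by (auto simp: s_def)
        thus ?thesis by (metis imageI lessThan_iff)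
      qed
    qed
  qed
  have "(\<Sum>k<n. F k) = F i0 + (\<Sum>k\<in>{..<n} - {i0}. F k)" using assms by (simp add: sum.remove)
  also have "(\<Sum>k\<in>{..<n} - {i0}. F k) = (\<Sum>i<n - 1. F (s i))"
    unfolding img[symmetric] by (rule sum.reindex[OF inj, unfolded comp_def])
  finally show ?thesis by (simp add: s_def)
qed

lemma homog_sys:
  fixes a :: "nat \<Rightarrow> nat \<Rightarrow> real"
  shows "q < n \<Longrightarrow> \<exists>c::nat\<Rightarrow>real. (\<exists>i<n. c i \<noteq> 0) \<and> (\<forall>j<q. (\<Sum>i<n. a j i * c i) = 0)"
proof (induction q arbitrary: n a)
  case 0 thus ?case by (intro exI[of _ "\<lambda>i. 1"]) auto
next
  case (Suc q n a)
  show ?case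
  proof (cases "\<forall>i<n. a q i = 0")
    case True
    obtain c where c: "\<exists>i<n. c i \<noteq> 0" "\<forall>j<q. (\<Sum>i<n. a j i * c i) = 0" using Suc.IH[of n a] Suc.prems by auto
    have "\<forall>j<Suc q. (\<Sum>i<n. a j i * c i) = 0"
    proof (intro allI impI)
      fix j assume "j < Suc q"
      thus "(\<Sum>i<n. a j i * c i) = 0" using c(2) True by (cases "j = q") auto
    qed
    thus ?thesis using c(1) by blast
  next
    case False
    then obtain i0 where i0: "i0 < n" "a q i0 \<noteq> 0" by auto
    define s where "s = (\<lambda>i::nat. if i < i0 then i else Suc i)"
    define b where "b = (\<lambda>j i. a j (s i) - a j i0 * a q (s i) / a q i0)"
    obtain c' where c': "\<exists>i<n - 1. c' i \<noteq> 0" "\<forall>j<q. (\<Sum>i<n - 1. b j i * c' i) = 0"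
    proof -
      have "q < n - 1" using Suc.prems by simp
      from Suc.IH[of "n - 1" b, OF this] show ?thesis using that by blast
    qed
    define t where "t = - (\<Sum>i<n - 1. a q (s i) * c' i) / a q i0"
    define c where "c = (\<lambda>k. if k = i0 then t else if k < i0 then c' k else c' (k - 1))"
    have cs: "c (s i) = c' i" for i by (auto simp: c_def s_def)
    have row: "(\<Sum>k<n. a j k * c k) = a j i0 * t + (\<Sum>i<n - 1. a j (s i) * c' i)" for j
      using skip_sum[OF i0(1), of "\<lambda>k. a j k * c k"] cs by (simp add: c_def s_def)
    have "\<forall>j<Suc q. (\<Sum>i<n. a j i * c i) = 0"
    proof (intro allI impI)
      fix j assume j: "j < Suc q"
      show "(\<Sum>i<n. a j i * c i) = 0"
      proof (cases "j = q")
        case True thus ?thesis unfolding row using i0(2) by (simp add: t_def)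
      next
        case False
        hence jq: "j < q" using j by simp
        have "(\<Sum>i<n - 1. a j (s i) * c' i) = (\<Sum>i<n - 1. b j i * c' i + a j i0 / a q i0 * (a q (s i) * c' i))"
          by (rule sum.cong) (auto simp: b_def field_simps i0(2))
        also have "\<dots> = (\<Sum>i<n - 1. b j i * c' i) + a j i0 / a q i0 * (\<Sum>i<n - 1. a q (s i) * c' i)"
          by (simp add: sum.distrib sum_distrib_left)
        also have "\<dots> = - a j i0 * t" using c'(2) jq i0(2) by (simp add: t_def field_simps)
        finally show ?thesis unfolding row by simp
      qed
    qed
    moreover have "\<exists>i<n. c i \<noteq> 0"
    proof -
      obtain i where i: "i < n - 1" "c' i \<noteq> 0" using c'(1) by auto
      have "s i < n" using i by (auto simp: s_def)
      thus ?thesis using i cs by metis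
    qed
    ultimately show ?thesis by blast
  qed
qed

lemma c0_comb:
  fixes h :: "nat \<Rightarrow> nat \<Rightarrow> real"
  assumes "\<And>i. i < n \<Longrightarrow> h i \<longlonglongrightarrow> 0"
  shows "(\<lambda>k. \<Sum>i<n. c i * h i k) \<longlonglongrightarrow> 0"
proof -
  have "(\<lambda>k. \<Sum>i<n. c i * h i k) \<longlonglongrightarrow> (\<Sum>i<n. c i * 0)"
    by (intro tendsto_sum tendsto_mult tendsto_const) (use assms in auto)
  thus ?thesis by simp
qed

lemma scalar_reach:
  fixes u y s :: real
  assumes "\<bar>u\<bar> \<le> s" "y \<noteq> 0"
  defines "tk \<equiv> (s - sgn y * u) / \<bar>y\<bar>"
  shows "0 \<le> tk" "\<And>t. 0 \<le> t \<Longrightarrow> t \<le> tk \<Longrightarrow> \<bar>u + t * y\<bar> \<le> s" "\<bar>u + tk * y\<bar> = s"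
proof -
  consider "y > 0" | "y < 0" using assms(2) by linarith
  note cs = this
  show "0 \<le> tk" using cs
  proof cases
    case 1 thus ?thesis using assms(1) by (simp add: tk_def)
  next
    case 2
    have "0 \<le> s + u" using assms(1) by linarith
    thus ?thesis using 2 by (simp add: tk_def divide_nonneg_neg)
  qed
  show "\<bar>u + t * y\<bar> \<le> s" if t: "0 \<le> t" "t \<le> tk" for t
    using cs
  proof cases
    case 1
    have "t * y \<le> tk * y" using t 1 by (intro mult_right_mono) auto
    moreover have "tk * y = s - u" using 1 by (simp add: tk_def)
    moreover have "0 \<le> t * y" using t 1 by simp
    ultimately show ?thesis using assms(1) by auto
  next
    case 2
    have "tk * y \<le> t * y" using t 2 by (intro mult_right_mono_neg) auto
    moreover have "tk * y = - s - u" using 2 by (simp add: tk_def field_simps)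
    moreover have "t * y \<le> 0" using t 2 by (simp add: mult_nonneg_nonpos)
    ultimately show ?thesis using assms(1) by auto
  qed
  show "\<bar>u + tk * y\<bar> = s"
    using cs assms(1)
  proof cases
    case 1 thus ?thesis using assms(1) by (simp add: tk_def)
  next
    case 2
    have "tk * y = - s - u" using 2 by (simp add: tk_def field_simps)
    thus ?thesis using assms(1) by auto
  qed
qed

lemma c0_finite_ge:
  fixes v :: "nat \<Rightarrow> real"
  assumes "v \<longlonglongrightarrow> 0" "s > 0"
  shows "finite {k. s \<le> \<bar>v k\<bar>}"
proof -
  have "{k. s \<le> \<bar>v k\<bar>} \<subseteq> {k. \<bar>v k\<bar> > s/2}" using assms(2) by auto
  thus ?thesis by (rule finite_subset) (rule c0_finite[OF assms(1)], use assms(2) in simp)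
qed


lemma peak_lemma:
  fixes h :: "nat \<Rightarrow> nat \<Rightarrow> real" and a :: "nat \<Rightarrow> nat \<Rightarrow> real"
  assumes h0: "\<And>i. i < n \<Longrightarrow> h i \<longlonglongrightarrow> 0"
    and inj: "\<And>c. (\<forall>j<q. (\<Sum>i<n. a j i * c i) = 0) \<Longrightarrow> (\<exists>i<n. c i \<noteq> 0) \<Longrightarrow> \<exists>k. (\<Sum>i<n. c i * h i k) \<noteq> 0"
  shows "q + r \<le> n \<Longrightarrow> q < n \<Longrightarrow> \<exists>c s I. (\<forall>j<q. (\<Sum>i<n. a j i * c i) = 0) \<and> (\<exists>i<n. c i \<noteq> 0) \<and> s > 0
     \<and> finite I \<and> r \<le> card I \<and> (\<forall>k\<in>I. \<bar>\<Sum>i<n. c i * h i k\<bar> = s) \<and> (\<forall>k. \<bar>\<Sum>i<n. c i * h i k\<bar> \<le> s)"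
proof (induction r)
  case 0
  obtain c where c: "\<exists>i<n. c i \<noteq> 0" "\<forall>j<q. (\<Sum>i<n. a j i * c i) = 0" using homog_sys[of q n a] 0(2) by blast
  obtain B where B: "B \<ge> 0" "\<forall>k. \<bar>\<Sum>i<n. c i * h i k\<bar> \<le> B" using c0_bound[OF c0_comb[where h=h and n=n, OF h0]] by blast
  show ?case
    by (rule exI[of _ c], rule exI[of _ "B + 1"], rule exI[of _ "{}"]) (use c B in \<open>auto intro: order_trans\<close>)
next
  case (Suc r)
  from Suc.prems have qrn: "q + r \<le> n" by simp
  obtain c s I where c: "\<forall>j<q. (\<Sum>i<n. a j i * c i) = 0" "\<exists>i<n. c i \<noteq> 0" and s: "s > 0"
    and I: "finite I" "r \<le> card I" and Ipk: "\<forall>k\<in>I. \<bar>\<Sum>i<n. c i * h i k\<bar> = s"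
    and ub: "\<forall>k. \<bar>\<Sum>i<n. c i * h i k\<bar> \<le> s"
    using Suc.IH[OF qrn Suc.prems(2)] by blast
  show ?case
  proof (cases "Suc r \<le> card I")
    case True thus ?thesis using c s I Ipk ub by blast
  next
    case False
    hence cI: "card I = r" using I by simp
    obtain \<iota> where \<iota>: "bij_betw \<iota> {0..<card I} I" using ex_bij_betw_nat_finite[OF I(1)] by blast
    define a' where "a' = (\<lambda>j i. if j < q then a j i else h i (\<iota> (j - q)))"
    have "q + r < n" using Suc.prems by simp
    then obtain d where d: "\<exists>i<n. d i \<noteq> 0" "\<forall>j<q + r. (\<Sum>i<n. a' j i * d i) = 0"
      using homog_sys[of "q + r" n a'] by blast
    define u where "u = (\<lambda>k. \<Sum>i<n. c i * h i k)"
    define y where "y = (\<lambda>k. \<Sum>i<n. d i * h i k)"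
    have dc: "\<forall>j<q. (\<Sum>i<n. a j i * d i) = 0"
    proof (intro allI impI)
      fix j assume j: "j < q"
      hence "(\<Sum>i<n. a' j i * d i) = 0" using d(2) by simp
      thus "(\<Sum>i<n. a j i * d i) = 0" using j by (simp add: a'_def)
    qed
    have yI: "y k = 0" if "k \<in> I" for k
    proof -
      have "k \<in> \<iota> ` {0..<card I}" using that \<iota> by (simp add: bij_betw_def)
      then obtain j where j: "j < r" "\<iota> j = k" using cI by auto
      have "(\<Sum>i<n. a' (q + j) i * d i) = 0" using d(2) j by auto
      thus ?thesis unfolding y_def a'_def using j by (simp add: mult.commute)
    qed
    obtain kst where kst: "y kst \<noteq> 0" using inj[OF dc d(1)] unfolding y_def by blast
    have ubu: "\<And>k. \<bar>u k\<bar> \<le> s" using ub unfolding u_def by blast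
    define tk where "tk = (\<lambda>k. (s - sgn (y k) * u k) / \<bar>y k\<bar>)"
    define T where "T = tk kst"
    have T0: "0 \<le> T" unfolding T_def tk_def using scalar_reach(1)[OF ubu[of kst] kst] by simp
    define K where "K = {k. y k \<noteq> 0 \<and> tk k \<le> T}"
    have Ksub: "K \<subseteq> {k. s \<le> \<bar>\<bar>u k\<bar> + T * \<bar>y k\<bar>\<bar>}"
    proof
      fix k assume k: "k \<in> K"
      hence yk: "y k \<noteq> 0" and le: "(s - sgn (y k) * u k) / \<bar>y k\<bar> \<le> T" by (auto simp: K_def tk_def)
      have "s - sgn (y k) * u k \<le> T * \<bar>y k\<bar>" using le yk by (simp add: divide_le_eq)
      moreover have "sgn (y k) * u k \<le> \<bar>u k\<bar>" by (cases "y k > 0") (auto simp: sgn_if)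
      ultimately show "k \<in> {k. s \<le> \<bar>\<bar>u k\<bar> + T * \<bar>y k\<bar>\<bar>}" using T0 by auto
    qed
    have u0: "u \<longlonglongrightarrow> 0" unfolding u_def by (rule c0_comb[where h=h and n=n, OF h0])
    have y0: "y \<longlonglongrightarrow> 0" unfolding y_def by (rule c0_comb[where h=h and n=n, OF h0])
    have v0: "(\<lambda>k. \<bar>u k\<bar> + T * \<bar>y k\<bar>) \<longlonglongrightarrow> 0"
      using tendsto_add[OF tendsto_rabs_zero[OF u0] tendsto_mult_right_zero[OF tendsto_rabs_zero[OF y0], of T]] by simp
    have finK: "finite K" by (rule finite_subset[OF Ksub c0_finite_ge[OF v0 s]])
    have kstK: "kst \<in> K" using kst by (simp add: K_def T_def)
    define tst where "tst = Min (tk ` K)"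
    have "tst \<in> tk ` K" unfolding tst_def using finK kstK by (intro Min_in) auto
    then obtain k1 where k1: "k1 \<in> K" "tk k1 = tst" by auto
    have y1: "y k1 \<noteq> 0" using k1 by (simp add: K_def)
    have tst0: "0 \<le> tst" using k1 scalar_reach(1)[OF ubu[of k1] y1] by (simp add: tk_def)
    have tstT: "tst \<le> T" unfolding tst_def T_def using finK kstK by (intro Min_le) auto
    have tst_le: "tst \<le> tk k" if "y k \<noteq> 0" for k
    proof (cases "k \<in> K")
      case True thus ?thesis unfolding tst_def using finK by (intro Min_le) auto
    next
      case False thus ?thesis using that tstT by (auto simp: K_def)
    qed
    define c' where "c' = (\<lambda>i. c i + tst * d i)"
    have u': "(\<Sum>i<n. c' i * h i k) = u k + tst * y k" for k
      unfolding c'_def u_def y_def by (simp add: algebra_simps sum.distrib sum_distrib_left)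
    have con': "\<forall>j<q. (\<Sum>i<n. a j i * c' i) = 0"
    proof (intro allI impI)
      fix j assume "j < q"
      hence "(\<Sum>i<n. a j i * c i) = 0" "(\<Sum>i<n. a j i * d i) = 0" using c dc by auto
      thus "(\<Sum>i<n. a j i * c' i) = 0" unfolding c'_def
        by (simp add: algebra_simps sum.distrib sum_distrib_left[symmetric])
    qed
    have ub': "\<bar>\<Sum>i<n. c' i * h i k\<bar> \<le> s" for k
    proof (cases "y k = 0")
      case True thus ?thesis using ubu u' by simp
    next
      case False
      have "\<bar>u k + tst * y k\<bar> \<le> s"
        using scalar_reach(2)[OF ubu[of k] False, of tst] tst0 tst_le[OF False] by (simp add: tk_def)
      thus ?thesis using u' by simp
    qed
    have pk1: "\<bar>\<Sum>i<n. c' i * h i k1\<bar> = s"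
    proof -
      have "\<bar>u k1 + tk k1 * y k1\<bar> = s" unfolding tk_def by (rule scalar_reach(3)[OF ubu[of k1] y1])
      thus ?thesis using k1(2) u' by simp
    qed
    have k1I: "k1 \<notin> I" using yI y1 by auto
    define I' where "I' = insert k1 I"
    have I'f: "finite I'" and cI': "Suc r \<le> card I'" using I k1I cI by (auto simp: I'_def)
    have pk': "\<forall>k\<in>I'. \<bar>\<Sum>i<n. c' i * h i k\<bar> = s"
      using pk1 Ipk yI u' unfolding I'_def u_def by auto
    have nz': "\<exists>i<n. c' i \<noteq> 0"
    proof (rule ccontr)
      assume "\<not> (\<exists>i<n. c' i \<noteq> 0)"
      hence "(\<Sum>i<n. c' i * h i k1) = 0" by simp
      thus False using pk1 s by simp
    qed
    show ?thesis using con' nz' s I'f cI' pk' ub' by blast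
  qed
qed


lemma powr_conv1:
  fixes a b e p :: real
  assumes "0 \<le> a" "0 \<le> b" "0 < e" "0 < p" "e * a powr (1/p) \<le> b powr (1/p)"
  shows "e powr p * a \<le> b"
proof -
  have "(e * a powr (1/p)) powr p \<le> (b powr (1/p)) powr p"
    by (rule powr_mono2) (use assms in auto)
  moreover have "(e * a powr (1/p)) powr p = e powr p * a"
    using assms by (simp add: powr_mult powr_powr)
  moreover have "(b powr (1/p)) powr p = b" using assms by (simp add: powr_powr)
  ultimately show ?thesis by simp
qed

lemma powr_conv2:
  fixes a b e p :: real
  assumes "0 \<le> a" "0 \<le> b" "0 < e" "0 < p" "e * a \<le> b"
  shows "e powr (1/p) * a powr (1/p) \<le> b powr (1/p)"
proof -
  have "(e * a) powr (1/p) \<le> b powr (1/p)" by (rule powr_mono2) (use assms in auto)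
  thus ?thesis using assms by (simp add: powr_mult)
qed

lemma powr_conv3:
  fixes a b C p :: real
  assumes "0 \<le> a" "0 \<le> b" "0 < p" "b powr (1/p) \<le> C * a powr (1/p)"
  shows "b \<le> max C 1 powr p * a"
proof -
  have "C * a powr (1/p) \<le> max C 1 * a powr (1/p)" by (rule mult_right_mono) auto
  hence h: "b powr (1/p) \<le> max C 1 * a powr (1/p)" using assms(4) by linarith
  have "(b powr (1/p)) powr p \<le> (max C 1 * a powr (1/p)) powr p"
    by (rule powr_mono2) (use h assms in auto)
  moreover have "(max C 1 * a powr (1/p)) powr p = max C 1 powr p * a"
    using assms by (simp add: powr_mult powr_powr)
  moreover have "(b powr (1/p)) powr p = b" using assms by (simp add: powr_powr)
  ultimately show ?thesis by simp
qed

lemma lin_add: "lin_subspace Z \<Longrightarrow> x \<in> Z \<Longrightarrow> y \<in> Z \<Longrightarrow> (\<lambda>k. x k + y k) \<in> Z"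
  unfolding lin_subspace_def by blast
lemma lin_scale: "lin_subspace Z \<Longrightarrow> x \<in> Z \<Longrightarrow> (\<lambda>k. c * x k) \<in> Z"
  unfolding lin_subspace_def by blast
lemma lin_zero: "lin_subspace Z \<Longrightarrow> (\<lambda>k. 0) \<in> Z"
  unfolding lin_subspace_def by blast
lemma T_in: "T \<in> bounded_ops NX NY X Y \<Longrightarrow> x \<in> X \<Longrightarrow> T x \<in> Y"
  unfolding bounded_ops_def by blast
lemma T_add: "T \<in> bounded_ops NX NY X Y \<Longrightarrow> x \<in> X \<Longrightarrow> y \<in> X \<Longrightarrow> T (\<lambda>k. x k + y k) = (\<lambda>k. T x k + T y k)"
  unfolding bounded_ops_def by blast
lemma T_scale: "T \<in> bounded_ops NX NY X Y \<Longrightarrow> x \<in> X \<Longrightarrow> T (\<lambda>k. c * x k) = (\<lambda>k. c * T x k)"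
  unfolding bounded_ops_def by blast
lemma T_bnd: "T \<in> bounded_ops NX NY X Y \<Longrightarrow> \<exists>C. \<forall>x\<in>X. NY (T x) \<le> C * NX x"
  unfolding bounded_ops_def by blast

lemma lin_comb_in:
  fixes n :: nat
  assumes "lin_subspace Z" "\<And>i. i < n \<Longrightarrow> f i \<in> Z"
  shows "(\<lambda>k. \<Sum>i<n. c i * f i k) \<in> Z"
  using assms(2)
proof (induction n)
  case 0 thus ?case using assms(1) by (simp add: lin_subspace_def)
next
  case (Suc n)
  have a: "(\<lambda>k. \<Sum>i<n. c i * f i k) \<in> Z" using Suc by simp
  have b: "(\<lambda>k. c n * f n k) \<in> Z" using assms(1) Suc.prems[of n] by (simp add: lin_subspace_def)
  have "(\<lambda>k. (\<Sum>i<n. c i * f i k) + c n * f n k) \<in> Z" by (rule lin_add[OF assms(1) a b])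
  thus ?case by simp
qed

lemma T_comb:
  fixes n :: nat
  assumes Tb: "T \<in> bounded_ops NX NY X Y" and X: "lin_subspace X" and f: "\<And>i. i < n \<Longrightarrow> f i \<in> X"
  shows "T (\<lambda>k. \<Sum>i<n. c i * f i k) = (\<lambda>k. \<Sum>i<n. c i * T (f i) k)"
  using f
proof (induction n)
  case 0
  have z: "(\<lambda>k. 0::real) \<in> X" using X by (simp add: lin_subspace_def)
  have "T (\<lambda>k. 0 * 0) = (\<lambda>k. 0 * T (\<lambda>k. 0) k)" by (rule T_scale[OF Tb z])
  thus ?case by simp
next
  case (Suc n)
  have a: "(\<lambda>k. \<Sum>i<n. c i * f i k) \<in> X" by (rule lin_comb_in[OF X]) (use Suc.prems in auto)
  have b: "(\<lambda>k. c n * f n k) \<in> X" using X Suc.prems[of n] by (simp add: lin_subspace_def)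
  have "T (\<lambda>k. \<Sum>i<Suc n. c i * f i k) = T (\<lambda>k. (\<Sum>i<n. c i * f i k) + c n * f n k)" by simp
  also have "\<dots> = (\<lambda>k. T (\<lambda>k. \<Sum>i<n. c i * f i k) k + T (\<lambda>k. c n * f n k) k)"
    by (rule T_add[OF Tb a b])
  also have "T (\<lambda>k. c n * f n k) = (\<lambda>k. c n * T (f n) k)"
    by (rule T_scale[OF Tb]) (use Suc.prems in simp)
  also have "T (\<lambda>k. \<Sum>i<n. c i * f i k) = (\<lambda>k. \<Sum>i<n. c i * T (f i) k)" using Suc by simp
  finally show ?case by simp
qed

context dom_space
begin

lemma K_ge: "4 \<le> 2 powr (p+1)"
proof -
  have "2 powr 2 \<le> 2 powr (p+1)" by (rule powr_mono) (use p1 in auto)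
  thus ?thesis by simp
qed

lemma qsum:
  "(\<And>n. n < L \<Longrightarrow> y n \<in> E) \<Longrightarrow> (\<lambda>k. \<Sum>n<L. y n k) \<in> E \<and>
     \<Phi> (\<lambda>k. \<Sum>n<L. y n k) \<le> (\<Sum>n<L. (2 powr (p+1)) ^ (n+1) * \<Phi> (y n))"
proof (induction L arbitrary: y)
  case 0
  have "\<Phi> (\<lambda>k. 0) \<le> 0"
  proof -
    have "\<Phi> (\<lambda>k. 0 * 0) = \<bar>0\<bar> powr p * \<Phi> (\<lambda>k. 0)" using scale[OF zero_in, of 0] by simp
    thus ?thesis by simp
  qed
  thus ?case using zero_in by simp
next
  case (Suc L y)
  define K where "K = 2 powr (p+1)"
  have K0: "0 \<le> K" unfolding K_def by simp
  have IH: "(\<lambda>k. \<Sum>n<L. y (Suc n) k) \<in> E \<and> \<Phi> (\<lambda>k. \<Sum>n<L. y (Suc n) k) \<le> (\<Sum>n<L. K ^ (n+1) * \<Phi> (y (Suc n)))"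
    using Suc.IH[of "\<lambda>n. y (Suc n)"] Suc.prems unfolding K_def by auto
  have y0: "y 0 \<in> E" using Suc.prems by simp
  have eq: "(\<lambda>k. \<Sum>n<Suc L. y n k) = (\<lambda>k. y 0 k + (\<Sum>n<L. y (Suc n) k))"
    by (rule ext, subst sum.lessThan_Suc_shift, simp)
  have q: "(\<lambda>k. y 0 k + (\<Sum>n<L. y (Suc n) k)) \<in> E \<and>
      \<Phi> (\<lambda>k. y 0 k + (\<Sum>n<L. y (Suc n) k)) \<le> K * (\<Phi> (y 0) + \<Phi> (\<lambda>k. \<Sum>n<L. y (Suc n) k))"
    using qtri[OF y0 IH[THEN conjunct1]] unfolding K_def by simp
  have "K * (\<Phi> (y 0) + \<Phi> (\<lambda>k. \<Sum>n<L. y (Suc n) k)) \<le> K * (\<Phi> (y 0) + (\<Sum>n<L. K ^ (n+1) * \<Phi> (y (Suc n))))"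
    using IH K0 by (intro mult_left_mono) auto
  also have "\<dots> = (\<Sum>n<Suc L. K ^ (n+1) * \<Phi> (y n))"
    by (subst sum.lessThan_Suc_shift) (simp add: sum_distrib_left algebra_simps)
  finally show ?case using q eq unfolding K_def by simp
qed

lemma neg_in: "x \<in> E \<Longrightarrow> (\<lambda>k. - x k) \<in> E \<and> \<Phi> (\<lambda>k. - x k) = \<Phi> x"
  using scale[of x "-1"] by simp

lemma Phi_zero: "\<Phi> (\<lambda>k. 0) = 0"
proof -
  have "\<Phi> (\<lambda>k. 0 * 0) = \<bar>0\<bar> powr p * \<Phi> (\<lambda>k. 0)" using scale[OF zero_in, of 0] by simp
  thus ?thesis by simp
qed

lemma Phi_pos: "x \<in> E \<Longrightarrow> x k \<noteq> 0 \<Longrightarrow> 0 < \<Phi> x"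
  using sup[of x k] p1 by (smt (verit) powr_gt_zero)

end


locale main_setting = dom_space E \<Phi> p for E \<Phi> p +
  fixes w :: "nat \<Rightarrow> real" and X Y :: "(nat \<Rightarrow> real) set" and T :: "(nat \<Rightarrow> real) \<Rightarrow> (nat \<Rightarrow> real)"
    and \<epsilon> :: real
  assumes w: "lorentz_weight w" and XE: "X \<subseteq> E" and linX: "lin_subspace X"
    and YL: "Y \<subseteq> lorentz_space w p"
    and Tb: "T \<in> bounded_ops (\<lambda>x. \<Phi> x powr (1/p)) (lorentz_norm w p) X Y"
    and eps: "0 < \<epsilon>"
    and bad: "\<And>N. \<exists>Z. Z \<subseteq> X \<and> lin_subspace Z \<and> dim_at_least Z N \<and>
                (\<forall>z\<in>Z. \<not> lorentz_norm w p (T z) < \<epsilon> * \<Phi> z powr (1/p))"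
begin

lemma L: "dom_space (lorentz_space w p) (Phi w p) p" using lorentz_dom[OF w p1] .
lemma p0: "0 < p" using p1 by simp
lemma lnorm: "lorentz_norm w p x = Phi w p x powr (1/p)" by (simp add: lorentz_norm_def Phi_def)

lemma TX: "x \<in> X \<Longrightarrow> T x \<in> lorentz_space w p" using T_in[OF Tb] YL by blast

lemma Dbound: "\<exists>D>0. \<forall>x\<in>X. Phi w p (T x) \<le> D * \<Phi> x"
proof -
  obtain C where C: "\<forall>x\<in>X. lorentz_norm w p (T x) \<le> C * \<Phi> x powr (1/p)" using T_bnd[OF Tb] by blast
  have "\<forall>x\<in>X. Phi w p (T x) \<le> max C 1 powr p * \<Phi> x"
  proof
    fix x assume x: "x \<in> X"
    show "Phi w p (T x) \<le> max C 1 powr p * \<Phi> x"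
      by (rule powr_conv3) (use C x nonneg XE p0 dom_space.nonneg[OF L] TX in \<open>auto simp: lnorm\<close>)
  qed
  moreover have "0 < max C 1 powr p" by simp
  ultimately show ?thesis by blast
qed

lemma bad': "\<exists>Z. Z \<subseteq> X \<and> lin_subspace Z \<and> dim_at_least Z N \<and> (\<forall>z\<in>Z. \<epsilon> powr p * \<Phi> z \<le> Phi w p (T z))"
proof -
  obtain Z where Z: "Z \<subseteq> X" "lin_subspace Z" "dim_at_least Z N"
    "\<forall>z\<in>Z. \<not> lorentz_norm w p (T z) < \<epsilon> * \<Phi> z powr (1/p)" using bad by blast
  have "\<forall>z\<in>Z. \<epsilon> powr p * \<Phi> z \<le> Phi w p (T z)"
  proof
    fix z assume z: "z \<in> Z"
    hence zX: "z \<in> X" using Z by auto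
    show "\<epsilon> powr p * \<Phi> z \<le> Phi w p (T z)"
      by (rule powr_conv1) (use Z(4) z zX XE nonneg dom_space.nonneg[OF L] TX eps p0 in \<open>auto simp: lnorm not_less\<close>)
  qed
  thus ?thesis using Z by blast
qed

lemma nonsum: "\<exists>r. B < (\<Sum>j<r. w j)"
proof (rule ccontr)
  assume "\<not> (\<exists>r. B < (\<Sum>j<r. w j))"
  hence "\<And>r. (\<Sum>j<r. w j) \<le> B" by (simp add: not_less)
  hence "summable w" by (rule summableI_nonneg_bounded[rotated]) (use lw_facts(3)[OF w] in auto)
  thus False using w by (simp add: lorentz_weight_def)
qed

lemma good_vec:
  assumes \<delta>: "0 < \<delta>"
  shows "\<exists>z\<in>X. \<Phi> z = 1 \<and> (\<forall>k<m. z k = 0) \<and> (\<forall>k<m. T z k = 0) \<and> (\<forall>k. \<bar>T z k\<bar> powr p \<le> \<delta>)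
           \<and> \<epsilon> powr p \<le> Phi w p (T z)"
proof -
  obtain D where D: "D > 0" "\<forall>x\<in>X. Phi w p (T x) \<le> D * \<Phi> x" using Dbound by blast
  define B where "B = D / \<delta>"
  have B0: "0 < B" using D \<delta> by (simp add: B_def)
  obtain r where r: "B < (\<Sum>j<r. w j)" using nonsum by blast
  have r1: "1 \<le> r" using r B0 by (cases r) auto
  define N where "N = 2 * m + r"
  obtain Z where Z: "Z \<subseteq> X" "lin_subspace Z" "dim_at_least Z N"
    and Zb: "\<forall>z\<in>Z. \<epsilon> powr p * \<Phi> z \<le> Phi w p (T z)" using bad' by blast
  obtain f where f: "\<forall>i<N. f i \<in> Z"
    and ind: "\<forall>c::nat\<Rightarrow>real. (\<forall>k. (\<Sum>i<N. c i * f i k) = 0) \<longrightarrow> (\<forall>i<N. c i = 0)"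
    using Z(3) unfolding dim_at_least_def by blast
  have fX: "\<And>i. i < N \<Longrightarrow> f i \<in> X" using f Z(1) by auto
  define h where "h = (\<lambda>i. T (f i))"
  have h0: "\<And>i. i < N \<Longrightarrow> h i \<longlonglongrightarrow> 0" unfolding h_def using TX[OF fX] lsp_D by blast
  define a where "a = (\<lambda>j i. if j < m then f i j else h i (j - m))"
  have Tcomb: "\<And>c. T (\<lambda>k. \<Sum>i<N. c i * f i k) = (\<lambda>k. \<Sum>i<N. c i * h i k)"
    unfolding h_def by (rule T_comb[OF Tb linX fX])
  have zZ: "\<And>c. (\<lambda>k. \<Sum>i<N. c i * f i k) \<in> Z" by (rule lin_comb_in[OF Z(2)]) (use f in auto)
  have zX: "\<And>c. (\<lambda>k. \<Sum>i<N. c i * f i k) \<in> X" using zZ Z(1) by auto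
  have znz: "\<exists>k. (\<Sum>i<N. c i * f i k) \<noteq> 0" if "\<exists>i<N. c i \<noteq> 0" for c
    using ind that by blast
  have injh: "\<exists>k. (\<Sum>i<N. c i * h i k) \<noteq> 0" if c1: "\<forall>j<2*m. (\<Sum>i<N. a j i * c i) = 0" and c2: "\<exists>i<N. c i \<noteq> 0" for c
  proof (rule ccontr)
    assume "\<not> (\<exists>k. (\<Sum>i<N. c i * h i k) \<noteq> 0)"
    hence T0: "T (\<lambda>k. \<Sum>i<N. c i * f i k) = (\<lambda>k. 0)" unfolding Tcomb by auto
    obtain k where k: "(\<Sum>i<N. c i * f i k) \<noteq> 0" using znz[OF c2] by blast
    have "0 < \<Phi> (\<lambda>k. \<Sum>i<N. c i * f i k)"
      by (rule Phi_pos[where x="\<lambda>k. \<Sum>i<N. c i * f i k" and k=k]) (use zX XE k in auto)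
    hence "0 < \<epsilon> powr p * \<Phi> (\<lambda>k. \<Sum>i<N. c i * f i k)" using eps by simp
    also have "\<dots> \<le> Phi w p (T (\<lambda>k. \<Sum>i<N. c i * f i k))" using Zb zZ by blast
    also have "\<dots> = 0" unfolding T0 by (rule dom_space.Phi_zero[OF L])
    finally show False by simp
  qed
  have "2 * m + r \<le> N" "2 * m < N" using r1 by (auto simp: N_def)
  then obtain c s I where con: "\<forall>j<2*m. (\<Sum>i<N. a j i * c i) = 0" and cnz: "\<exists>i<N. c i \<noteq> 0" and s: "s > 0"
    and I: "finite I" "r \<le> card I" and pk: "\<forall>k\<in>I. \<bar>\<Sum>i<N. c i * h i k\<bar> = s"
    and ub: "\<forall>k. \<bar>\<Sum>i<N. c i * h i k\<bar> \<le> s"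
    using peak_lemma[where h=h and n=N and q="2*m" and a=a and r=r, OF h0 injh] by blast
  define z where "z = (\<lambda>k. \<Sum>i<N. c i * f i k)"
  have zinX: "z \<in> X" and zinZ: "z \<in> Z" unfolding z_def using zX zZ by auto
  have zE: "z \<in> E" using zinX XE by auto
  have Tz: "T z = (\<lambda>k. \<Sum>i<N. c i * h i k)" unfolding z_def by (rule Tcomb)
  have zvan: "z k = 0" if "k < m" for k
  proof -
    have "(\<Sum>i<N. a k i * c i) = 0" using con that by auto
    thus ?thesis using that unfolding z_def a_def by (simp add: mult.commute)
  qed
  have Tzvan: "T z k = 0" if "k < m" for k
  proof -
    have "(\<Sum>i<N. a (k + m) i * c i) = 0" using con that by auto
    thus ?thesis using that unfolding Tz a_def by (simp add: mult.commute)
  qed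
  obtain k0 where "z k0 \<noteq> 0" using znz[OF cnz] unfolding z_def by blast
  hence Pz: "0 < \<Phi> z" by (rule Phi_pos[where x=z, OF zE])
  have Tzsp: "T z \<in> lorentz_space w p" by (rule TX[OF zinX])
  have "s powr p * (\<Sum>j<r. w j) \<le> Phi w p (T z)"
    by (rule Phi_peaks[OF w p0 Tzsp I]) (use s pk in \<open>auto simp: Tz\<close>)
  moreover have "Phi w p (T z) \<le> D * \<Phi> z" using D zinX by blast
  moreover have "s powr p * B \<le> s powr p * (\<Sum>j<r. w j)" using r by (intro mult_left_mono) auto
  ultimately have "s powr p * B \<le> D * \<Phi> z" by linarith
  hence spd: "s powr p \<le> \<delta> * \<Phi> z" using \<delta> D by (simp add: B_def field_simps)
  define \<mu> where "\<mu> = \<Phi> z powr (-1/p)"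
  have \<mu>0: "0 < \<mu>" unfolding \<mu>_def using Pz by simp
  have \<mu>p: "\<mu> powr p = 1 / \<Phi> z"
  proof -
    have "\<mu> powr p = \<Phi> z powr ((-1/p) * p)" unfolding \<mu>_def by (simp add: powr_powr)
    also have "(-1/p) * p = -1" using p0 by simp
    also have "\<Phi> z powr (-1) = 1 / \<Phi> z" using Pz by (simp add: powr_minus divide_inverse)
    finally show ?thesis .
  qed
  define z' where "z' = (\<lambda>k. \<mu> * z k)"
  have z'Z: "z' \<in> Z" unfolding z'_def by (rule lin_scale[OF Z(2) zinZ])
  have z'X: "z' \<in> X" using z'Z Z(1) by auto
  have Pz': "\<Phi> z' = 1" unfolding z'_def using scale[OF zE, of \<mu>] \<mu>0 \<mu>p Pz by simp
  have Tz': "T z' = (\<lambda>k. \<mu> * T z k)" unfolding z'_def by (rule T_scale[OF Tb zinX])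
  have sup': "\<bar>T z' k\<bar> powr p \<le> \<delta>" for k
  proof -
    have "\<bar>T z' k\<bar> powr p = \<mu> powr p * \<bar>T z k\<bar> powr p" unfolding Tz' using \<mu>0 by (simp add: abs_mult powr_mult)
    also have "\<dots> \<le> \<mu> powr p * s powr p"
      by (intro mult_left_mono powr_mono2) (use p0 ub Tz in auto)
    also have "\<dots> \<le> \<mu> powr p * (\<delta> * \<Phi> z)" by (rule mult_left_mono[OF spd]) simp
    also have "\<dots> = \<delta>" using \<mu>p Pz by simp
    finally show ?thesis .
  qed
  have "\<epsilon> powr p * \<Phi> z' \<le> Phi w p (T z')" using Zb z'Z by blast
  hence "\<epsilon> powr p \<le> Phi w p (T z')" using Pz' by simp
  moreover have "\<forall>k<m. z' k = 0" using zvan by (auto simp: z'_def)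
  moreover have "\<forall>k<m. T z' k = 0" using Tzvan unfolding Tz' by auto
  ultimately show ?thesis using z'X Pz' sup' by blast
qed

end


definition tailf :: "nat \<Rightarrow> (nat \<Rightarrow> real) \<Rightarrow> (nat \<Rightarrow> real)" where
  "tailf M x = (\<lambda>k. if M \<le> k then x k else 0)"

context main_setting
begin

definition "KK = 2 powr (p+1)"
definition "ee = \<epsilon> powr p"
definition "th = min 1 (ee / (4 * KK^2))"
definition "eta n = th / (KK^(n+1) * 2^(n+1))"
definition "dl m = ee / (4 * KK * (real m + 1))"

lemma KK4: "4 \<le> KK" unfolding KK_def by (rule K_ge)
lemma ee0: "0 < ee" unfolding ee_def using eps by simp
lemma th0: "0 < th" unfolding th_def using ee0 KK4 by simp
lemma th1: "th \<le> 1" "th \<le> ee / (4 * KK^2)" unfolding th_def by auto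
lemma eta0: "0 < eta n" unfolding eta_def using th0 KK4 by simp
lemma eta_le: "eta n \<le> th"
proof -
  have a: "1 \<le> KK^(n+1)" using KK4 by (intro one_le_power) simp
  have b: "1 \<le> (2::real)^(n+1)" by (intro one_le_power) simp
  have "1 * 1 \<le> KK^(n+1) * 2^(n+1)" by (rule mult_mono) (use a b in auto)
  hence "1 \<le> KK^(n+1) * 2^(n+1)" by simp
  thus ?thesis unfolding eta_def using th0 by (simp add: divide_le_eq mult_le_cancel_left1)
qed
lemma dl0: "0 < dl m" unfolding dl_def using ee0 KK4 by simp
lemma mdl: "real m * dl m \<le> ee / (4 * KK)"
proof -
  have "real m * dl m = ee / (4 * KK) * (real m / (real m + 1))" unfolding dl_def by (simp add: field_simps)
  also have "\<dots> \<le> ee / (4 * KK) * 1" by (rule mult_left_mono) (use ee0 KK4 in auto)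
  finally show ?thesis by simp
qed

definition "Pstep n m z M \<longleftrightarrow> z \<in> X \<and> \<Phi> z = 1 \<and> (\<forall>k<m. z k = 0) \<and> (\<forall>k<m. T z k = 0)
   \<and> (\<forall>k. \<bar>T z k\<bar> powr p \<le> dl m) \<and> ee \<le> Phi w p (T z) \<and> m < M
   \<and> \<Phi> (tailf M z) \<le> eta n \<and> Phi w p (tailf M (T z)) \<le> eta n"

lemma step_ex: "\<exists>z M. Pstep n m z M"
proof -
  obtain z where z: "z \<in> X" "\<Phi> z = 1" "\<forall>k<m. z k = 0" "\<forall>k<m. T z k = 0" "\<forall>k. \<bar>T z k\<bar> powr p \<le> dl m"
    "\<epsilon> powr p \<le> Phi w p (T z)" using good_vec[OF dl0, of m] by blast
  have zE: "z \<in> E" using z(1) XE by auto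
  have t1: "(\<lambda>M. \<Phi> (tailf M z)) \<longlonglongrightarrow> 0" unfolding tailf_def by (rule tail[OF zE])
  have t2: "(\<lambda>M. Phi w p (tailf M (T z))) \<longlonglongrightarrow> 0" unfolding tailf_def by (rule dom_space.tail[OF L TX[OF z(1)]])
  have "eventually (\<lambda>M. \<Phi> (tailf M z) < eta n) sequentially" using order_tendstoD(2)[OF t1 eta0] .
  moreover have "eventually (\<lambda>M. Phi w p (tailf M (T z)) < eta n) sequentially" using order_tendstoD(2)[OF t2 eta0] .
  ultimately have "eventually (\<lambda>M. \<Phi> (tailf M z) < eta n \<and> Phi w p (tailf M (T z)) < eta n) sequentially"
    by (rule eventually_conj)
  then obtain M0 where M0: "\<And>M. M \<ge> M0 \<Longrightarrow> \<Phi> (tailf M z) < eta n \<and> Phi w p (tailf M (T z)) < eta n"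
    unfolding eventually_sequentially by blast
  define M where "M = max M0 (Suc m)"
  have "Pstep n m z M" unfolding Pstep_def using z M0[of M] by (auto simp: M_def ee_def)
  thus ?thesis by blast
qed

definition "stp n m = (SOME zM. Pstep n m (fst zM) (snd zM))"

lemma stp: "Pstep n m (fst (stp n m)) (snd (stp n m))"
proof -
  obtain z M where "Pstep n m z M" using step_ex by blast
  hence "\<exists>zM. Pstep n m (fst zM) (snd zM)" by (intro exI[of _ "(z, M)"]) simp
  thus ?thesis unfolding stp_def by (rule someI_ex)
qed

primrec ms :: "nat \<Rightarrow> nat" where
  "ms 0 = 0"
| "ms (Suc n) = snd (stp n (ms n))"

definition "zs n = fst (stp n (ms n))"

lemma zs_props: "Pstep n (ms n) (zs n) (ms (Suc n))"
  unfolding zs_def using stp[of n "ms n"] by simp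

lemma zsX: "zs n \<in> X" and zsE: "zs n \<in> E" and zs1: "\<Phi> (zs n) = 1"
  and zs_van: "k < ms n \<Longrightarrow> zs n k = 0" and Tzs_van: "k < ms n \<Longrightarrow> T (zs n) k = 0"
  and Tzs_sup: "\<bar>T (zs n) k\<bar> powr p \<le> dl (ms n)" and Tzs_big: "ee \<le> Phi w p (T (zs n))"
  and ms_lt: "ms n < ms (Suc n)"
  and tl1: "\<Phi> (tailf (ms (Suc n)) (zs n)) \<le> eta n" and tl2: "Phi w p (tailf (ms (Suc n)) (T (zs n))) \<le> eta n"
  using zs_props[of n] XE unfolding Pstep_def by auto

lemma ms_mono: "i \<le> j \<Longrightarrow> ms i \<le> ms j"
proof (rule lift_Suc_mono_le[of ms])
  show "\<And>n. ms n \<le> ms (Suc n)" using ms_lt less_imp_le by blast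
qed

lemma TzsL: "T (zs n) \<in> lorentz_space w p" by (rule TX[OF zsX])

end


context main_setting
begin

definition "bb n = (\<lambda>k. if k < ms (Suc n) then zs n k else 0)"
definition "uu n = (\<lambda>k. if k < ms (Suc n) then T (zs n) k else 0)"

lemma bb_E: "bb n \<in> E \<and> \<Phi> (bb n) \<le> 1"
proof -
  have le: "\<And>k. \<bar>bb n k\<bar> \<le> \<bar>zs n k\<bar>" by (simp add: bb_def)
  show ?thesis using mono[OF zsE[of n] le] zs1[of n] by simp
qed

lemma uu_L: "uu n \<in> lorentz_space w p \<and> Phi w p (uu n) \<le> Phi w p (T (zs n))"
proof -
  have le: "\<And>k. \<bar>uu n k\<bar> \<le> \<bar>T (zs n) k\<bar>" by (simp add: uu_def)
  show ?thesis using dom_space.mono[OF L TzsL[of n] le] by simp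
qed

lemma tl1E: "tailf (ms (Suc n)) (zs n) \<in> E"
proof -
  have le: "\<And>k. \<bar>tailf (ms (Suc n)) (zs n) k\<bar> \<le> \<bar>zs n k\<bar>" by (simp add: tailf_def)
  show ?thesis using mono[OF zsE[of n] le] by simp
qed
lemma tl2L: "tailf (ms (Suc n)) (T (zs n)) \<in> lorentz_space w p"
proof -
  have le: "\<And>k. \<bar>tailf (ms (Suc n)) (T (zs n)) k\<bar> \<le> \<bar>T (zs n) k\<bar>" by (simp add: tailf_def)
  show ?thesis using dom_space.mono[OF L TzsL[of n] le] by simp
qed

lemma dec1: "zs n k = bb n k + tailf (ms (Suc n)) (zs n) k" unfolding bb_def tailf_def by auto
lemma dec2: "T (zs n) k = uu n k + tailf (ms (Suc n)) (T (zs n)) k" unfolding uu_def tailf_def by auto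

lemma uu_big: "ee / (2 * KK) \<le> Phi w p (uu n) - real (ms n) * dl (ms n)"
proof -
  have "ee \<le> Phi w p (T (zs n))" by (rule Tzs_big)
  also have "T (zs n) = (\<lambda>k. uu n k + tailf (ms (Suc n)) (T (zs n)) k)" using dec2 by auto
  also have "Phi w p \<dots> \<le> KK * (Phi w p (uu n) + Phi w p (tailf (ms (Suc n)) (T (zs n))))"
    using dom_space.qtri[OF L uu_L[THEN conjunct1] tl2L] unfolding KK_def by blast
  also have "\<dots> \<le> KK * (Phi w p (uu n) + eta n)" using tl2 KK4 by (intro mult_left_mono) auto
  finally have a: "ee \<le> KK * (Phi w p (uu n) + eta n)" .
  have "eta n \<le> ee / (4 * KK^2)" using eta_le[of n] th1 by linarith
  also have "\<dots> \<le> ee / (4 * KK)" using KK4 ee0 by (intro divide_left_mono) (auto simp: power2_eq_square)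
  finally have b: "eta n \<le> ee / (4 * KK)" .
  have c: "real (ms n) * dl (ms n) \<le> ee / (4 * KK)" by (rule mdl)
  from a have "ee / KK \<le> Phi w p (uu n) + eta n" using KK4 by (simp add: divide_le_eq mult.commute)
  thus ?thesis using b c KK4 by (simp add: field_simps)
qed

lemma blocks_upper:
  "(\<lambda>k. \<Sum>n<L. a n * bb n k) \<in> E \<and> \<Phi> (\<lambda>k. \<Sum>n<L. a n * bb n k) \<le> (\<Sum>n<L. \<bar>a n\<bar> powr p)"
proof (induction L)
  case 0 thus ?case using zero_in Phi_zero by simp
next
  case (Suc L)
  define F where "F = (\<lambda>k. \<Sum>n<L. a n * bb n k)"
  define c where "c = (\<lambda>k. a L * bb L k)"
  have FE: "F \<in> E" using Suc F_def by simp
  have cE: "c \<in> E" and cP: "\<Phi> c = \<bar>a L\<bar> powr p * \<Phi> (bb L)" using scale[OF bb_E[THEN conjunct1]] by (auto simp: c_def)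
  have Fz: "F k = 0" if "k \<notin> {..<ms L}" for k
  proof -
    have "bb n k = 0" if "n < L" for n
    proof -
      have "ms (Suc n) \<le> ms L" using that by (intro ms_mono) simp
      thus ?thesis using \<open>k \<notin> {..<ms L}\<close> by (auto simp: bb_def)
    qed
    thus ?thesis unfolding F_def by simp
  qed
  have cz: "c k = 0" if "k \<notin> {..<ms (Suc L)}" for k using that by (simp add: c_def bb_def)
  have d: "F k = 0 \<or> c k = 0" for k
  proof (cases "k < ms L")
    case True thus ?thesis using zs_van[OF True] by (simp add: c_def bb_def)
  next
    case False thus ?thesis using Fz by simp
  qed
  have "\<Phi> (\<lambda>k. F k + c k) \<le> \<Phi> F + \<Phi> c" by (rule disj[where Sx="{..<ms L}" and Sy="{..<ms (Suc L)}", OF FE cE _ Fz _ cz d]) auto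
  also have "\<dots> \<le> (\<Sum>n<L. \<bar>a n\<bar> powr p) + \<bar>a L\<bar> powr p"
    using Suc bb_E[of L] nonneg[of "bb L"] unfolding cP F_def by (intro add_mono mult_right_le_one_le) auto
  finally have "\<Phi> (\<lambda>k. F k + c k) \<le> (\<Sum>n<Suc L. \<bar>a n\<bar> powr p)" by simp
  moreover have "(\<lambda>k. F k + c k) \<in> E" using qtri[OF FE cE] by simp
  moreover have "(\<lambda>k. \<Sum>n<Suc L. a n * bb n k) = (\<lambda>k. F k + c k)" by (simp add: F_def c_def)
  ultimately show ?case by simp
qed

lemma blocks_lower:
  "(\<lambda>k. \<Sum>n<L. a n * uu n k) \<in> lorentz_space w p \<and>
     (\<Sum>n<L. \<bar>a n\<bar> powr p) * (ee / (2 * KK)) \<le> Phi w p (\<lambda>k. \<Sum>n<L. a n * uu n k)"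
proof (induction L)
  case 0 thus ?case using dom_space.zero_in[OF L] dom_space.Phi_zero[OF L] by simp
next
  case (Suc L)
  define F where "F = (\<lambda>k. \<Sum>n<L. a n * uu n k)"
  define c where "c = (\<lambda>k. a L * uu L k)"
  have FL: "F \<in> lorentz_space w p" using Suc F_def by simp
  have cL: "c \<in> lorentz_space w p" and cP: "Phi w p c = \<bar>a L\<bar> powr p * Phi w p (uu L)"
    using dom_space.scale[OF L uu_L[THEN conjunct1]] by (auto simp: c_def)
  have Fz: "F k = 0" if "k \<notin> {..<ms L}" for k
  proof -
    have "uu n k = 0" if "n < L" for n
    proof -
      have "ms (Suc n) \<le> ms L" using that by (intro ms_mono) simp
      thus ?thesis using \<open>k \<notin> {..<ms L}\<close> by (auto simp: uu_def)
    qed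
    thus ?thesis unfolding F_def by simp
  qed
  have cz: "c k = 0" if "k \<notin> {ms L..<ms (Suc L)}" for k
  proof (cases "k < ms L")
    case True thus ?thesis using Tzs_van[OF True] by (simp add: c_def uu_def)
  next
    case False thus ?thesis using that by (simp add: c_def uu_def)
  qed
  have cs: "\<bar>c k\<bar> powr p \<le> \<bar>a L\<bar> powr p * dl (ms L)" for k
  proof -
    have "\<bar>c k\<bar> powr p = \<bar>a L\<bar> powr p * \<bar>uu L k\<bar> powr p" by (simp add: c_def abs_mult powr_mult)
    also have "\<dots> \<le> \<bar>a L\<bar> powr p * \<bar>T (zs L) k\<bar> powr p"
      by (intro mult_left_mono powr_mono2) (use p0 in \<open>auto simp: uu_def\<close>)
    also have "\<dots> \<le> \<bar>a L\<bar> powr p * dl (ms L)" by (intro mult_left_mono Tzs_sup) simp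
    finally show ?thesis .
  qed
  have "Phi w p F + Phi w p c - real (ms L) * (\<bar>a L\<bar> powr p * dl (ms L)) \<le> Phi w p (\<lambda>k. F k + c k)"
    by (rule Phi_lower_block[where Sx="{..<ms L}" and Sy="{ms L..<ms (Suc L)}" and m="ms L", OF w p0 _ _ Fz _ _ cz cs]) auto
  moreover have "\<bar>a L\<bar> powr p * (ee / (2 * KK)) \<le> Phi w p c - real (ms L) * (\<bar>a L\<bar> powr p * dl (ms L))"
  proof -
    have "\<bar>a L\<bar> powr p * (ee / (2 * KK)) \<le> \<bar>a L\<bar> powr p * (Phi w p (uu L) - real (ms L) * dl (ms L))"
      by (rule mult_left_mono[OF uu_big]) simp
    thus ?thesis unfolding cP by (simp add: algebra_simps)
  qed
  ultimately have "(\<Sum>n<Suc L. \<bar>a n\<bar> powr p) * (ee / (2 * KK)) \<le> Phi w p (\<lambda>k. F k + c k)"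
    using Suc F_def by (simp add: algebra_simps)
  moreover have "(\<lambda>k. F k + c k) \<in> lorentz_space w p" using dom_space.qtri[OF L FL cL] by simp
  moreover have "(\<lambda>k. \<Sum>n<Suc L. a n * uu n k) = (\<lambda>k. F k + c k)" by (simp add: F_def c_def)
  ultimately show ?case by simp
qed

lemma KKeta: "KK ^ (n+1) * eta n \<le> th"
proof -
  have "KK ^ (n+1) * eta n = th / 2^(n+1)" unfolding eta_def using KK4 by (simp add: field_simps)
  also have "\<dots> \<le> th"
  proof -
    have "1 \<le> (2::real)^(n+1)" by (rule one_le_power) simp
    hence "th * 1 \<le> th * 2^(n+1)" using th0 by (intro mult_left_mono) auto
    thus ?thesis by (simp add: divide_le_eq)
  qed
  finally show ?thesis .
qed

lemma tails_X:
  "(\<lambda>k. \<Sum>n<L. a n * tailf (ms (Suc n)) (zs n) k) \<in> E \<and>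
    \<Phi> (\<lambda>k. \<Sum>n<L. a n * tailf (ms (Suc n)) (zs n) k) \<le> th * (\<Sum>n<L. \<bar>a n\<bar> powr p)"
proof -
  have yE: "(\<lambda>k. a n * tailf (ms (Suc n)) (zs n) k) \<in> E" for n using scale[OF tl1E] by blast
  have q: "(\<lambda>k. \<Sum>n<L. a n * tailf (ms (Suc n)) (zs n) k) \<in> E \<and>
     \<Phi> (\<lambda>k. \<Sum>n<L. a n * tailf (ms (Suc n)) (zs n) k) \<le> (\<Sum>n<L. KK ^ (n+1) * \<Phi> (\<lambda>k. a n * tailf (ms (Suc n)) (zs n) k))"
    using qsum[of L "\<lambda>n k. a n * tailf (ms (Suc n)) (zs n) k"] yE unfolding KK_def by blast
  have "(\<Sum>n<L. KK ^ (n+1) * \<Phi> (\<lambda>k. a n * tailf (ms (Suc n)) (zs n) k)) \<le> (\<Sum>n<L. th * \<bar>a n\<bar> powr p)"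
  proof (rule sum_mono)
    fix n
    have "KK ^ (n+1) * \<Phi> (\<lambda>k. a n * tailf (ms (Suc n)) (zs n) k) = \<bar>a n\<bar> powr p * (KK ^ (n+1) * \<Phi> (tailf (ms (Suc n)) (zs n)))"
      using scale[OF tl1E[of n], of "a n"] by simp
    also have "\<dots> \<le> \<bar>a n\<bar> powr p * (KK ^ (n+1) * eta n)"
      using tl1[of n] KK4 by (intro mult_left_mono) auto
    also have "\<dots> \<le> \<bar>a n\<bar> powr p * th" by (intro mult_left_mono KKeta) simp
    finally show "KK ^ (n+1) * \<Phi> (\<lambda>k. a n * tailf (ms (Suc n)) (zs n) k) \<le> th * \<bar>a n\<bar> powr p" by (simp only: mult.commute)
  qed
  thus ?thesis using q by (simp add: sum_distrib_left)
qed

lemma tails_Y: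
  "(\<lambda>k. \<Sum>n<L. a n * tailf (ms (Suc n)) (T (zs n)) k) \<in> lorentz_space w p \<and>
    Phi w p (\<lambda>k. \<Sum>n<L. a n * tailf (ms (Suc n)) (T (zs n)) k) \<le> th * (\<Sum>n<L. \<bar>a n\<bar> powr p)"
proof -
  have yE: "(\<lambda>k. a n * tailf (ms (Suc n)) (T (zs n)) k) \<in> lorentz_space w p" for n
    using dom_space.scale[OF L tl2L] by blast
  have q: "(\<lambda>k. \<Sum>n<L. a n * tailf (ms (Suc n)) (T (zs n)) k) \<in> lorentz_space w p \<and>
     Phi w p (\<lambda>k. \<Sum>n<L. a n * tailf (ms (Suc n)) (T (zs n)) k) \<le> (\<Sum>n<L. KK ^ (n+1) * Phi w p (\<lambda>k. a n * tailf (ms (Suc n)) (T (zs n)) k))"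
    using dom_space.qsum[OF L, of L "\<lambda>n k. a n * tailf (ms (Suc n)) (T (zs n)) k"] yE unfolding KK_def by blast
  have "(\<Sum>n<L. KK ^ (n+1) * Phi w p (\<lambda>k. a n * tailf (ms (Suc n)) (T (zs n)) k)) \<le> (\<Sum>n<L. th * \<bar>a n\<bar> powr p)"
  proof (rule sum_mono)
    fix n
    have "KK ^ (n+1) * Phi w p (\<lambda>k. a n * tailf (ms (Suc n)) (T (zs n)) k) = \<bar>a n\<bar> powr p * (KK ^ (n+1) * Phi w p (tailf (ms (Suc n)) (T (zs n))))"
      using dom_space.scale[OF L tl2L[of n], of "a n"] by simp
    also have "\<dots> \<le> \<bar>a n\<bar> powr p * (KK ^ (n+1) * eta n)"
      using tl2[of n] KK4 by (intro mult_left_mono) auto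
    also have "\<dots> \<le> \<bar>a n\<bar> powr p * th" by (intro mult_left_mono KKeta) simp
    finally show "KK ^ (n+1) * Phi w p (\<lambda>k. a n * tailf (ms (Suc n)) (T (zs n)) k) \<le> th * \<bar>a n\<bar> powr p" by (simp only: mult.commute)
  qed
  thus ?thesis using q by (simp add: sum_distrib_left)
qed

end


lemma lin_diff: "lin_subspace Z \<Longrightarrow> x \<in> Z \<Longrightarrow> y \<in> Z \<Longrightarrow> (\<lambda>k. x k - y k) \<in> Z"
proof -
  assume Z: "lin_subspace Z" and x: "x \<in> Z" and y: "y \<in> Z"
  have "(\<lambda>k. x k + (-1) * y k) \<in> Z" by (rule lin_add[OF Z x lin_scale[OF Z y]])
  thus ?thesis by simp
qed

context main_setting
begin

lemma comb_est:
  fixes L :: nat and a :: "nat \<Rightarrow> real"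
  defines "x \<equiv> (\<lambda>k. \<Sum>n<L. a n * zs n k)"
  shows "x \<in> X" "\<Phi> x \<le> (8 * KK^3 / ee) * Phi w p (T x)"
    "(\<Sum>n<L. \<bar>a n\<bar> powr p) * ee \<le> 4 * KK^2 * Phi w p (T x)"
proof -
  define A where "A = (\<Sum>n<L. \<bar>a n\<bar> powr p)"
  have A0: "0 \<le> A" unfolding A_def by (simp add: sum_nonneg)
  show xX: "x \<in> X" unfolding x_def by (rule lin_comb_in[OF linX zsX])
  define B where "B = (\<lambda>k. \<Sum>n<L. a n * bb n k)"
  define Ee where "Ee = (\<lambda>k. \<Sum>n<L. a n * tailf (ms (Suc n)) (zs n) k)"
  have xBE: "x = (\<lambda>k. B k + Ee k)"
  proof (rule ext)
    fix k
    have "(\<Sum>n<L. a n * zs n k) = (\<Sum>n<L. a n * bb n k + a n * tailf (ms (Suc n)) (zs n) k)"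
      by (rule sum.cong[OF refl]) (subst dec1, simp add: distrib_left)
    thus "x k = B k + Ee k" unfolding x_def B_def Ee_def by (simp add: sum.distrib)
  qed
  have BE: "B \<in> E" "\<Phi> B \<le> A" using blocks_upper[where L=L and a=a] unfolding B_def A_def by auto
  have EeE: "Ee \<in> E" "\<Phi> Ee \<le> th * A" using tails_X[where L=L and a=a] unfolding Ee_def A_def by auto
  have "\<Phi> x \<le> KK * (\<Phi> B + \<Phi> Ee)" unfolding xBE KK_def using qtri[OF BE(1) EeE(1)] by blast
  also have "\<dots> \<le> KK * (A + th * A)" using BE EeE KK4 by (intro mult_left_mono add_mono) auto
  also have "\<dots> \<le> KK * (2 * A)"
  proof -
    have "th * A \<le> 1 * A" using th1 A0 by (intro mult_right_mono) auto
    thus ?thesis using KK4 by (intro mult_left_mono) auto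
  qed
  finally have PhX: "\<Phi> x \<le> 2 * KK * A" by simp
  have Tx: "T x = (\<lambda>k. \<Sum>n<L. a n * T (zs n) k)" unfolding x_def by (rule T_comb[OF Tb linX zsX])
  define U where "U = (\<lambda>k. \<Sum>n<L. a n * uu n k)"
  define F where "F = (\<lambda>k. \<Sum>n<L. a n * tailf (ms (Suc n)) (T (zs n)) k)"
  have UL: "U \<in> lorentz_space w p" "A * (ee / (2 * KK)) \<le> Phi w p U"
    using blocks_lower[where L=L and a=a] unfolding U_def A_def by auto
  have FL: "F \<in> lorentz_space w p" "Phi w p F \<le> th * A" using tails_Y[where L=L and a=a] unfolding F_def A_def by auto
  have TxL: "T x \<in> lorentz_space w p" by (rule TX[OF xX])
  have UTF: "U = (\<lambda>k. T x k + - F k)"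
  proof (rule ext)
    fix k
    have "(\<Sum>n<L. a n * T (zs n) k) = (\<Sum>n<L. a n * uu n k + a n * tailf (ms (Suc n)) (T (zs n)) k)"
      by (rule sum.cong[OF refl]) (subst dec2, simp add: distrib_left)
    thus "U k = T x k + - F k" unfolding U_def F_def Tx by (simp add: sum.distrib)
  qed
  have nF: "(\<lambda>k. - F k) \<in> lorentz_space w p" "Phi w p (\<lambda>k. - F k) = Phi w p F"
    using dom_space.neg_in[OF L FL(1)] by auto
  have "Phi w p U \<le> KK * (Phi w p (T x) + Phi w p (\<lambda>k. - F k))"
    unfolding UTF KK_def using dom_space.qtri[OF L TxL nF(1)] by blast
  also have "\<dots> \<le> KK * (Phi w p (T x) + th * A)" using nF FL KK4 by (intro mult_left_mono) auto
  finally have a: "A * (ee / (2 * KK)) \<le> KK * Phi w p (T x) + KK * th * A" using UL by (simp add: algebra_simps)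
  have "KK * th \<le> KK * (ee / (4 * KK^2))" using th1 KK4 by (intro mult_left_mono) auto
  also have "\<dots> = ee / (4 * KK)" using KK4 by (simp add: power2_eq_square field_simps)
  finally have "KK * th * A \<le> ee / (4 * KK) * A" using A0 by (intro mult_right_mono) auto
  with a have "A * (ee / (4 * KK)) \<le> KK * Phi w p (T x)" by (simp add: field_simps)
  hence b: "A * ee \<le> 4 * KK^2 * Phi w p (T x)" using KK4 by (simp add: field_simps power2_eq_square)
  thus "(\<Sum>n<L. \<bar>a n\<bar> powr p) * ee \<le> 4 * KK^2 * Phi w p (T x)" unfolding A_def .
  have "\<Phi> x \<le> 2 * KK * A" by (rule PhX)
  also have "\<dots> \<le> 2 * KK * (4 * KK^2 * Phi w p (T x) / ee)" using b ee0 KK4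
    by (intro mult_left_mono) (auto simp: le_divide_eq)
  also have "\<dots> = (8 * KK^3 / ee) * Phi w p (T x)" by (simp add: field_simps power2_eq_square power3_eq_cube)
  finally show "\<Phi> x \<le> (8 * KK^3 / ee) * Phi w p (T x)" .
qed

definition "spanZ = {x. \<exists>L a. x = (\<lambda>k. \<Sum>n<L. a n * zs n k)}"

lemma spanI: "x = (\<lambda>k. \<Sum>n<L. a n * zs n k) \<Longrightarrow> x \<in> spanZ"
  unfolding spanZ_def by blast

lemma span_X: "x \<in> spanZ \<Longrightarrow> x \<in> X"
  unfolding spanZ_def using comb_est(1) by blast

lemma pad: "L \<le> M \<Longrightarrow> (\<lambda>k. \<Sum>n<L. a n * zs n k) = (\<lambda>k. \<Sum>n<M. (if n < L then a n else 0) * zs n k)"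
proof (rule ext)
  fix k assume "L \<le> M"
  have "(\<Sum>n<M. (if n < L then a n else 0) * zs n k) = (\<Sum>n<L. (if n < L then a n else 0) * zs n k)"
    by (rule sum.mono_neutral_right) (use \<open>L \<le> M\<close> in auto)
  thus "(\<Sum>n<L. a n * zs n k) = (\<Sum>n<M. (if n < L then a n else 0) * zs n k)" by simp
qed

lemma span_add: "x \<in> spanZ \<Longrightarrow> y \<in> spanZ \<Longrightarrow> (\<lambda>k. x k + y k) \<in> spanZ"
proof -
  assume "x \<in> spanZ" "y \<in> spanZ"
  then obtain L1 a1 L2 a2 where x: "x = (\<lambda>k. \<Sum>n<L1. a1 n * zs n k)" and y: "y = (\<lambda>k. \<Sum>n<L2. a2 n * zs n k)"
    unfolding spanZ_def by blast
  define M where "M = max L1 L2"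
  have x': "x = (\<lambda>k. \<Sum>n<M. (if n < L1 then a1 n else 0) * zs n k)" unfolding x by (rule pad) (simp add: M_def)
  have y': "y = (\<lambda>k. \<Sum>n<M. (if n < L2 then a2 n else 0) * zs n k)" unfolding y by (rule pad) (simp add: M_def)
  have "(\<lambda>k. x k + y k) = (\<lambda>k. \<Sum>n<M. ((if n < L1 then a1 n else 0) + (if n < L2 then a2 n else 0)) * zs n k)"
    unfolding x' y' by (rule ext) (simp add: sum.distrib[symmetric] algebra_simps)
  thus ?thesis by (rule spanI)
qed

lemma span_scale: "x \<in> spanZ \<Longrightarrow> (\<lambda>k. c * x k) \<in> spanZ"
proof -
  assume "x \<in> spanZ"
  then obtain L a where x: "x = (\<lambda>k. \<Sum>n<L. a n * zs n k)" unfolding spanZ_def by blast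
  have "(\<lambda>k. c * x k) = (\<lambda>k. \<Sum>n<L. (\<lambda>n. c * a n) n * zs n k)" unfolding x by (simp add: sum_distrib_left algebra_simps)
  thus ?thesis by (rule spanI)
qed

lemma span_zero: "(\<lambda>k. 0) \<in> spanZ"
proof -
  have "(\<lambda>k. 0::real) = (\<lambda>k. \<Sum>n<0. (\<lambda>n. 0) n * zs n k)" by simp
  thus ?thesis by (rule spanI)
qed

lemma span_zs: "zs i \<in> spanZ"
proof -
  have "zs i = (\<lambda>k. \<Sum>n<Suc i. (\<lambda>n. if n = i then 1 else 0) n * zs n k)"
    by (rule ext) (simp add: if_distrib sum.delta)
  thus ?thesis by (rule spanI)
qed

definition "gam = ee / (8 * KK^3)"
lemma gam0: "0 < gam" unfolding gam_def using ee0 KK4 by simp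

lemma span_below: "x \<in> spanZ \<Longrightarrow> gam * \<Phi> x \<le> Phi w p (T x)"
proof -
  assume "x \<in> spanZ"
  then obtain L a where x: "x = (\<lambda>k. \<Sum>n<L. a n * zs n k)" unfolding spanZ_def by blast
  have "\<Phi> x \<le> (8 * KK^3 / ee) * Phi w p (T x)" unfolding x by (rule comb_est(2))
  thus ?thesis unfolding gam_def using ee0 KK4 by (simp add: field_simps)
qed

lemma T_zero: "T (\<lambda>k. 0) = (\<lambda>k. 0)"
proof -
  have "T (\<lambda>k. 0 * 0) = (\<lambda>k. 0 * T (\<lambda>k. 0) k)" by (rule T_scale[OF Tb lin_zero[OF linX]])
  thus ?thesis by simp
qed

lemma zs_indep: "(\<forall>k. (\<Sum>i<N. c i * zs i k) = 0) \<Longrightarrow> (\<forall>i<N. c i = 0)"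
proof -
  assume h: "\<forall>k. (\<Sum>i<N. c i * zs i k) = 0"
  hence x0: "(\<lambda>k. \<Sum>i<N. c i * zs i k) = (\<lambda>k. 0)" by auto
  have "(\<Sum>n<N. \<bar>c n\<bar> powr p) * ee \<le> 4 * KK^2 * Phi w p (T (\<lambda>k. \<Sum>i<N. c i * zs i k))" by (rule comb_est(3))
  also have "\<dots> = 0" unfolding x0 T_zero by (simp add: dom_space.Phi_zero[OF L])
  finally have "(\<Sum>n<N. \<bar>c n\<bar> powr p) \<le> 0" using ee0 by (simp add: mult_le_0_iff)
  hence "(\<Sum>n<N. \<bar>c n\<bar> powr p) = 0" by (simp add: antisym sum_nonneg)
  hence "\<forall>i\<in>{..<N}. \<bar>c i\<bar> powr p = 0" by (subst (asm) sum_nonneg_eq_0_iff) auto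
  thus ?thesis by auto
qed

end


context main_setting
begin

definition "Zc = {x \<in> X. \<exists>s. (\<forall>j. s j \<in> spanZ) \<and> (\<lambda>j. \<Phi> (\<lambda>k. s j k - x k)) \<longlonglongrightarrow> 0}"

lemma ZcI: "x \<in> X \<Longrightarrow> (\<And>j. s j \<in> spanZ) \<Longrightarrow> (\<lambda>j. \<Phi> (\<lambda>k. s j k - x k)) \<longlonglongrightarrow> 0 \<Longrightarrow> x \<in> Zc"
  unfolding Zc_def by blast

lemma diffE: "x \<in> X \<Longrightarrow> y \<in> X \<Longrightarrow> (\<lambda>k. x k - y k) \<in> E"
  using lin_diff[OF linX] XE by blast

lemma diff_sym: "x \<in> X \<Longrightarrow> y \<in> X \<Longrightarrow> \<Phi> (\<lambda>k. y k - x k) = \<Phi> (\<lambda>k. x k - y k)"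
proof -
  assume x: "x \<in> X" and y: "y \<in> X"
  have "\<Phi> (\<lambda>k. - (x k - y k)) = \<Phi> (\<lambda>k. x k - y k)" using neg_in[OF diffE[OF x y]] by blast
  thus ?thesis by simp
qed

lemma tri3: "x \<in> X \<Longrightarrow> y \<in> X \<Longrightarrow> z \<in> X \<Longrightarrow>
   \<Phi> (\<lambda>k. x k - z k) \<le> KK * (\<Phi> (\<lambda>k. x k - y k) + \<Phi> (\<lambda>k. y k - z k))"
proof -
  assume x: "x \<in> X" and y: "y \<in> X" and z: "z \<in> X"
  have "\<Phi> (\<lambda>k. (x k - y k) + (y k - z k)) \<le> KK * (\<Phi> (\<lambda>k. x k - y k) + \<Phi> (\<lambda>k. y k - z k))"
    using qtri[OF diffE[OF x y] diffE[OF y z]] unfolding KK_def by blast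
  thus ?thesis by simp
qed

lemma null_comp: "(\<And>j. 0 \<le> f j) \<Longrightarrow> (\<And>j. f j \<le> g j) \<Longrightarrow> g \<longlonglongrightarrow> 0 \<Longrightarrow> (f::nat\<Rightarrow>real) \<longlonglongrightarrow> 0"
  by (rule Lim_null_comparison[of _ g]) auto

lemma Zc_X: "Zc \<subseteq> X" unfolding Zc_def by auto

lemma Zc_zero: "(\<lambda>k. 0) \<in> Zc"
proof -
  have "(\<lambda>j. \<Phi> (\<lambda>k. (\<lambda>j k. 0) j k - 0)) \<longlonglongrightarrow> 0" using Phi_zero by simp
  thus ?thesis by (rule ZcI[OF lin_zero[OF linX] span_zero])
qed

lemma Zc_add: "x \<in> Zc \<Longrightarrow> y \<in> Zc \<Longrightarrow> (\<lambda>k. x k + y k) \<in> Zc"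
proof -
  assume "x \<in> Zc" "y \<in> Zc"
  then obtain s t where x: "x \<in> X" and y: "y \<in> X" and s: "\<forall>j. s j \<in> spanZ" and t: "\<forall>j. t j \<in> spanZ"
    and sl: "(\<lambda>j. \<Phi> (\<lambda>k. s j k - x k)) \<longlonglongrightarrow> 0" and tl: "(\<lambda>j. \<Phi> (\<lambda>k. t j k - y k)) \<longlonglongrightarrow> 0"
    unfolding Zc_def by blast
  define u where "u = (\<lambda>j k. s j k + t j k)"
  have u: "\<forall>j. u j \<in> spanZ" unfolding u_def using s t span_add by blast
  have sX: "s j \<in> X" and tX: "t j \<in> X" for j using s t span_X by auto
  have "(\<lambda>j. \<Phi> (\<lambda>k. u j k - (x k + y k))) \<longlonglongrightarrow> 0"
  proof (rule null_comp)
    show "0 \<le> \<Phi> (\<lambda>k. u j k - (x k + y k))" for j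
      unfolding u_def by (rule nonneg) (use diffE[OF lin_add[OF linX sX tX] lin_add[OF linX x y]] in simp)
    show "\<Phi> (\<lambda>k. u j k - (x k + y k)) \<le> KK * (\<Phi> (\<lambda>k. s j k - x k) + \<Phi> (\<lambda>k. t j k - y k))" for j
    proof -
      have "\<Phi> (\<lambda>k. (s j k - x k) + (t j k - y k)) \<le> KK * (\<Phi> (\<lambda>k. s j k - x k) + \<Phi> (\<lambda>k. t j k - y k))"
        using qtri[OF diffE[OF sX x] diffE[OF tX y]] unfolding KK_def by blast
      thus ?thesis unfolding u_def by (simp add: algebra_simps)
    qed
    show "(\<lambda>j. KK * (\<Phi> (\<lambda>k. s j k - x k) + \<Phi> (\<lambda>k. t j k - y k))) \<longlonglongrightarrow> 0"
      using tendsto_mult_right_zero[OF tendsto_add_zero[OF sl tl]] by simp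
  qed
  thus ?thesis by (rule ZcI[OF lin_add[OF linX x y] u[rule_format]])
qed

lemma Zc_scale: "x \<in> Zc \<Longrightarrow> (\<lambda>k. c * x k) \<in> Zc"
proof -
  assume "x \<in> Zc"
  then obtain s where x: "x \<in> X" and s: "\<forall>j. s j \<in> spanZ"
    and sl: "(\<lambda>j. \<Phi> (\<lambda>k. s j k - x k)) \<longlonglongrightarrow> 0" unfolding Zc_def by blast
  have sX: "s j \<in> X" for j using s span_X by auto
  define u where "u = (\<lambda>j k. c * s j k)"
  have u: "\<forall>j. u j \<in> spanZ" unfolding u_def using s span_scale by blast
  have eq: "\<Phi> (\<lambda>k. u j k - c * x k) = \<bar>c\<bar> powr p * \<Phi> (\<lambda>k. s j k - x k)" for j
  proof -
    have "\<Phi> (\<lambda>k. c * (s j k - x k)) = \<bar>c\<bar> powr p * \<Phi> (\<lambda>k. s j k - x k)"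
      using scale[OF diffE[OF sX x]] by blast
    thus ?thesis unfolding u_def by (simp add: algebra_simps)
  qed
  have "(\<lambda>j. \<Phi> (\<lambda>k. u j k - c * x k)) \<longlonglongrightarrow> 0"
    unfolding eq using tendsto_mult_right_zero[OF sl] by simp
  thus ?thesis by (rule ZcI[OF lin_scale[OF linX x] u[rule_format]])
qed

lemma Zc_lin: "lin_subspace Zc"
  unfolding lin_subspace_def using Zc_zero Zc_add Zc_scale by blast

lemma Zc_closed: "norm_closed (\<lambda>x. \<Phi> x powr (1/p)) X Zc"
  unfolding norm_closed_def
proof (intro allI impI)
  fix xs x assume xs: "\<forall>n. xs n \<in> Zc" and x: "x \<in> X"
    and lim: "(\<lambda>n. \<Phi> (\<lambda>k. xs n k - x k) powr (1/p)) \<longlonglongrightarrow> 0"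
  have xsX: "xs n \<in> X" for n using xs Zc_X by auto
  have lim2: "(\<lambda>n. \<Phi> (\<lambda>k. xs n k - x k)) \<longlonglongrightarrow> 0"
  proof -
    have "(\<lambda>n. (\<Phi> (\<lambda>k. xs n k - x k) powr (1/p)) powr p) \<longlonglongrightarrow> 0"
      by (rule tendsto_zero_powrI[OF lim tendsto_const]) (use p0 in auto)
    moreover have "(\<Phi> (\<lambda>k. xs n k - x k) powr (1/p)) powr p = \<Phi> (\<lambda>k. xs n k - x k)" for n
      using nonneg[OF diffE[OF xsX x]] p0 by (simp add: powr_powr)
    ultimately show ?thesis by simp
  qed
  have "\<forall>n. \<exists>s. s \<in> spanZ \<and> \<Phi> (\<lambda>k. s k - xs n k) < inverse (real (Suc n))"
  proof
    fix n
    obtain s where s: "\<forall>j. s j \<in> spanZ" and sl: "(\<lambda>j. \<Phi> (\<lambda>k. s j k - xs n k)) \<longlonglongrightarrow> 0"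
      using xs unfolding Zc_def by blast
    have "eventually (\<lambda>j. \<Phi> (\<lambda>k. s j k - xs n k) < inverse (real (Suc n))) sequentially"
      by (rule order_tendstoD(2)[OF sl]) simp
    then obtain j0 where "\<forall>j\<ge>j0. \<Phi> (\<lambda>k. s j k - xs n k) < inverse (real (Suc n))"
      unfolding eventually_sequentially by blast
    hence "\<Phi> (\<lambda>k. s j0 k - xs n k) < inverse (real (Suc n))" by simp
    thus "\<exists>s. s \<in> spanZ \<and> \<Phi> (\<lambda>k. s k - xs n k) < inverse (real (Suc n))" using s by blast
  qed
  then obtain g where g: "\<And>n. g n \<in> spanZ" "\<And>n. \<Phi> (\<lambda>k. g n k - xs n k) < inverse (real (Suc n))"
    by metis
  have gX: "g n \<in> X" for n using g span_X by auto
  have "(\<lambda>n. \<Phi> (\<lambda>k. g n k - x k)) \<longlonglongrightarrow> 0"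
  proof (rule null_comp)
    show "0 \<le> \<Phi> (\<lambda>k. g n k - x k)" for n by (rule nonneg[OF diffE[OF gX x]])
    show "\<Phi> (\<lambda>k. g n k - x k) \<le> KK * (inverse (real (Suc n)) + \<Phi> (\<lambda>k. xs n k - x k))" for n
    proof -
      have "\<Phi> (\<lambda>k. g n k - x k) \<le> KK * (\<Phi> (\<lambda>k. g n k - xs n k) + \<Phi> (\<lambda>k. xs n k - x k))"
        by (rule tri3[OF gX xsX x])
      also have "\<dots> \<le> KK * (inverse (real (Suc n)) + \<Phi> (\<lambda>k. xs n k - x k))"
        using g(2)[of n] KK4 by (intro mult_left_mono) auto
      finally show ?thesis .
    qed
    show "(\<lambda>n. KK * (inverse (real (Suc n)) + \<Phi> (\<lambda>k. xs n k - x k))) \<longlonglongrightarrow> 0"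
      using tendsto_mult_right_zero[OF tendsto_add_zero[OF LIMSEQ_inverse_real_of_nat lim2]] by simp
  qed
  thus "x \<in> Zc" by (rule ZcI[OF x g(1)])
qed

lemma Zc_inf: "infinite_dimensional Zc"
  unfolding infinite_dimensional_def dim_at_least_def
proof (rule allI)
  fix N
  have a: "\<forall>i<N. zs i \<in> Zc"
  proof (intro allI impI)
    fix i
    have "(\<lambda>j. \<Phi> (\<lambda>k. (\<lambda>j. zs i) j k - zs i k)) \<longlonglongrightarrow> 0" using Phi_zero by simp
    thus "zs i \<in> Zc" by (rule ZcI[OF zsX span_zs])
  qed
  have b: "\<forall>c. (\<forall>k. (\<Sum>i<N. c i * zs i k) = 0) \<longrightarrow> (\<forall>i<N. c i = 0)" using zs_indep by blast
  show "\<exists>f. (\<forall>i<N. f i \<in> Zc) \<and> (\<forall>c. (\<forall>k. (\<Sum>i<N. c i * f i k) = 0) \<longrightarrow> (\<forall>i<N. c i = 0))"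
    using a b by blast
qed

lemma Zc_below: "z \<in> Zc \<Longrightarrow> gam / KK^2 * \<Phi> z \<le> Phi w p (T z)"
proof -
  assume "z \<in> Zc"
  then obtain s where z: "z \<in> X" and s: "\<forall>j. s j \<in> spanZ"
    and sl: "(\<lambda>j. \<Phi> (\<lambda>k. s j k - z k)) \<longlonglongrightarrow> 0" unfolding Zc_def by blast
  obtain D where D: "D > 0" "\<forall>x\<in>X. Phi w p (T x) \<le> D * \<Phi> x" using Dbound by blast
  have sX: "s j \<in> X" for j using s span_X by auto
  have zE: "z \<in> E" using z XE by auto
  define R where "R = KK^2 / gam * Phi w p (T z)"
  define \<beta> where "\<beta> = KK^2 * D / gam + KK"
  have bnd: "\<Phi> z \<le> R + \<beta> * \<Phi> (\<lambda>k. s j k - z k)" for j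
  proof -
    have sjE: "s j \<in> E" using sX XE by auto
    have d1: "\<Phi> z \<le> KK * (\<Phi> (s j) + \<Phi> (\<lambda>k. z k - s j k))"
    proof -
      have "\<Phi> (\<lambda>k. s j k + (z k - s j k)) \<le> KK * (\<Phi> (s j) + \<Phi> (\<lambda>k. z k - s j k))"
        using qtri[OF sjE diffE[OF z sX]] unfolding KK_def by blast
      thus ?thesis by simp
    qed
    have d2: "gam * \<Phi> (s j) \<le> Phi w p (T (s j))" by (rule span_below[OF s[rule_format]])
    have Tdiff: "T (\<lambda>k. s j k - z k) = (\<lambda>k. T (s j) k - T z k)"
    proof -
      have "T (\<lambda>k. s j k + (-1) * z k) = (\<lambda>k. T (s j) k + T (\<lambda>k. (-1) * z k) k)"
        by (rule T_add[OF Tb sX[of j] lin_scale[OF linX z]])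
      also have "T (\<lambda>k. (-1) * z k) = (\<lambda>k. (-1) * T z k)" by (rule T_scale[OF Tb z])
      finally show ?thesis by simp
    qed
    have TzL: "T z \<in> lorentz_space w p" by (rule TX[OF z])
    have TdL: "T (\<lambda>k. s j k - z k) \<in> lorentz_space w p" by (rule TX[OF lin_diff[OF linX sX z]])
    have d3: "Phi w p (T (s j)) \<le> KK * (Phi w p (T z) + D * \<Phi> (\<lambda>k. s j k - z k))"
    proof -
      have "Phi w p (\<lambda>k. T z k + T (\<lambda>k. s j k - z k) k) \<le> KK * (Phi w p (T z) + Phi w p (T (\<lambda>k. s j k - z k)))"
        using dom_space.qtri[OF L TzL TdL] unfolding KK_def by blast
      moreover have "(\<lambda>k. T z k + T (\<lambda>k. s j k - z k) k) = T (s j)" unfolding Tdiff by auto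
      moreover have "Phi w p (T (\<lambda>k. s j k - z k)) \<le> D * \<Phi> (\<lambda>k. s j k - z k)"
        using D lin_diff[OF linX sX z] by blast
      ultimately show ?thesis using KK4 by (smt (verit) mult_left_mono)
    qed
    have sym: "\<Phi> (\<lambda>k. z k - s j k) = \<Phi> (\<lambda>k. s j k - z k)" by (rule diff_sym[OF sX z])
    have "\<Phi> (s j) \<le> Phi w p (T (s j)) / gam" using d2 gam0 by (simp add: field_simps)
    also have "\<dots> \<le> KK * (Phi w p (T z) + D * \<Phi> (\<lambda>k. s j k - z k)) / gam"
      by (rule divide_right_mono[OF d3]) (use gam0 in simp)
    finally have "\<Phi> z \<le> KK * (KK * (Phi w p (T z) + D * \<Phi> (\<lambda>k. s j k - z k)) / gam + \<Phi> (\<lambda>k. s j k - z k))"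
      using d1 sym KK4 by (smt (verit) mult_left_mono)
    thus ?thesis unfolding R_def \<beta>_def using gam0 by (simp add: field_simps power2_eq_square)
  qed
  have "(\<lambda>j. R + \<beta> * \<Phi> (\<lambda>k. s j k - z k)) \<longlonglongrightarrow> R + \<beta> * 0"
    by (intro tendsto_add tendsto_mult tendsto_const sl)
  hence "\<Phi> z \<le> R" using bnd by (intro LIMSEQ_le_const) auto
  thus ?thesis unfolding R_def using gam0 KK4 by (simp add: field_simps)
qed

lemma main_exists:
  "\<exists>Z. closed_subspace_of (\<lambda>x. \<Phi> x powr (1/p)) X Z \<and> infinite_dimensional Z \<and>
      (\<exists>c>0. \<forall>z\<in>Z. c * (\<Phi> z powr (1/p)) \<le> lorentz_norm w p (T z))"
proof -
  have A: "closed_subspace_of (\<lambda>x. \<Phi> x powr (1/p)) X Zc"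
    unfolding closed_subspace_of_def using Zc_X Zc_lin Zc_closed by blast
  have B: "infinite_dimensional Zc" by (rule Zc_inf)
  define c where "c = (gam / KK^2) powr (1/p)"
  have c0: "0 < c" unfolding c_def using gam0 KK4 by simp
  have "\<forall>z\<in>Zc. c * (\<Phi> z powr (1/p)) \<le> lorentz_norm w p (T z)"
  proof
    fix z assume z: "z \<in> Zc"
    have zX: "z \<in> X" using z Zc_X by auto
    show "c * (\<Phi> z powr (1/p)) \<le> lorentz_norm w p (T z)"
      unfolding c_def lnorm
      by (rule powr_conv2) (use Zc_below[OF z] nonneg[of z] zX XE dom_space.nonneg[OF L TX[OF zX]] gam0 KK4 p0 in auto)
  qed
  hence "\<exists>c>0. \<forall>z\<in>Zc. c * (\<Phi> z powr (1/p)) \<le> lorentz_norm w p (T z)" using c0 by blast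
  thus ?thesis using A B by blast
qed

end


lemma FSS_sub_SS: "FSS_ops NX NY X Y \<subseteq> SS_ops NX NY X Y"
proof
  fix T assume T: "T \<in> FSS_ops NX NY X Y"
  hence Tb: "T \<in> bounded_ops NX NY X Y" by (simp add: FSS_ops_def)
  have "\<not> (\<exists>Z. closed_subspace_of NX X Z \<and> infinite_dimensional Z \<and> (\<exists>c>0. \<forall>z\<in>Z. c * NX z \<le> NY (T z)))"
  proof
    assume "\<exists>Z. closed_subspace_of NX X Z \<and> infinite_dimensional Z \<and> (\<exists>c>0. \<forall>z\<in>Z. c * NX z \<le> NY (T z))"
    then obtain Z c where Z: "closed_subspace_of NX X Z" "infinite_dimensional Z" and c: "c > 0"
      and cb: "\<forall>z\<in>Z. c * NX z \<le> NY (T z)" by blast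
    obtain N where N: "\<forall>Z. Z \<subseteq> X \<and> lin_subspace Z \<and> dim_at_least Z N \<longrightarrow> (\<exists>z\<in>Z. NY (T z) < c * NX z)"
      using T c unfolding FSS_ops_def by blast
    have "Z \<subseteq> X" "lin_subspace Z" using Z(1) by (auto simp: closed_subspace_of_def)
    moreover have "dim_at_least Z N" using Z(2) by (simp add: infinite_dimensional_def)
    ultimately obtain z where "z \<in> Z" "NY (T z) < c * NX z" using N by blast
    thus False using cb by fastforce
  qed
  thus "T \<in> SS_ops NX NY X Y" using Tb by (simp add: SS_ops_def)
qed

lemma SS_sub_FSS:
  assumes D: "dom_space E \<Phi> p" and w: "lorentz_weight w" and XE: "X \<subseteq> E" and linX: "lin_subspace X"
    and YL: "Y \<subseteq> lorentz_space w p"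
  shows "SS_ops (\<lambda>x. \<Phi> x powr (1/p)) (lorentz_norm w p) X Y \<subseteq> FSS_ops (\<lambda>x. \<Phi> x powr (1/p)) (lorentz_norm w p) X Y"
proof
  fix T assume T: "T \<in> SS_ops (\<lambda>x. \<Phi> x powr (1/p)) (lorentz_norm w p) X Y"
  hence Tb: "T \<in> bounded_ops (\<lambda>x. \<Phi> x powr (1/p)) (lorentz_norm w p) X Y" by (simp add: SS_ops_def)
  show "T \<in> FSS_ops (\<lambda>x. \<Phi> x powr (1/p)) (lorentz_norm w p) X Y"
  proof (rule ccontr)
    assume nF: "T \<notin> FSS_ops (\<lambda>x. \<Phi> x powr (1/p)) (lorentz_norm w p) X Y"
    have H: "\<not> (\<forall>\<epsilon>>0. \<exists>N. \<forall>Z. Z \<subseteq> X \<and> lin_subspace Z \<and> dim_at_least Z N \<longrightarrow>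
        (\<exists>z\<in>Z. lorentz_norm w p (T z) < \<epsilon> * \<Phi> z powr (1/p)))"
    proof
      assume "\<forall>\<epsilon>>0. \<exists>N. \<forall>Z. Z \<subseteq> X \<and> lin_subspace Z \<and> dim_at_least Z N \<longrightarrow>
        (\<exists>z\<in>Z. lorentz_norm w p (T z) < \<epsilon> * \<Phi> z powr (1/p))"
      hence "T \<in> FSS_ops (\<lambda>x. \<Phi> x powr (1/p)) (lorentz_norm w p) X Y"
        using Tb unfolding FSS_ops_def by (simp only: mem_Collect_eq)
      thus False using nF by contradiction
    qed
    then obtain \<epsilon> where eps: "\<epsilon> > 0" and bad: "\<forall>N. \<exists>Z. Z \<subseteq> X \<and> lin_subspace Z \<and> dim_at_least Z N \<and>
        \<not> (\<exists>z\<in>Z. lorentz_norm w p (T z) < \<epsilon> * \<Phi> z powr (1/p))"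
      by (meson not_le)
    have M: "main_setting E \<Phi> p w X Y T \<epsilon>"
    proof (rule main_setting.intro[OF D], rule main_setting_axioms.intro)
      show "lorentz_weight w" by (rule w)
      show "X \<subseteq> E" by (rule XE)
      show "lin_subspace X" by (rule linX)
      show "Y \<subseteq> lorentz_space w p" by (rule YL)
      show "T \<in> bounded_ops (\<lambda>x. \<Phi> x powr (1/p)) (lorentz_norm w p) X Y" by (rule Tb)
      show "0 < \<epsilon>" by (rule eps)
      show "\<exists>Z. Z \<subseteq> X \<and> lin_subspace Z \<and> dim_at_least Z N \<and>
                (\<forall>z\<in>Z. \<not> lorentz_norm w p (T z) < \<epsilon> * \<Phi> z powr (1/p))" for N
      proof -
        obtain Z where "Z \<subseteq> X" "lin_subspace Z" "dim_at_least Z N"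
          "\<not> (\<exists>z\<in>Z. lorentz_norm w p (T z) < \<epsilon> * \<Phi> z powr (1/p))" using bad by blast
        thus ?thesis by blast
      qed
    qed
    from main_setting.main_exists[OF M] T show False unfolding SS_ops_def by blast
  qed
qed

lemma dom_lin: "dom_space E \<Phi> p \<Longrightarrow> lin_subspace E"
  unfolding lin_subspace_def using dom_space.zero_in dom_space.qtri dom_space.scale by blast

lemma lnorm_eq: "lorentz_norm w p = (\<lambda>x. Phi w p x powr (1/p))"
  by (rule ext) (simp add: lorentz_norm_def Phi_def)

lemma lpnorm_eq: "lp_norm p = (\<lambda>x. Psi p x powr (1/p))"
  by (rule ext) (simp add: lp_norm_def Psi_def)

theorem theorem3p5:
  fixes w :: "nat \<Rightarrow> real" and p :: real
  assumes "1 \<le> p" and "lorentz_weight w"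
  shows "(\<forall>X Y. closed_subspace_of (lorentz_norm w p) (lorentz_space w p) X \<longrightarrow>
                closed_subspace_of (lorentz_norm w p) (lorentz_space w p) Y \<longrightarrow>
                FSS_ops (lorentz_norm w p) (lorentz_norm w p) X Y
                  = SS_ops (lorentz_norm w p) (lorentz_norm w p) X Y)
       \<and> FSS_ops (lp_norm p) (lorentz_norm w p) (lp_space p) (lorentz_space w p)
           = SS_ops (lp_norm p) (lorentz_norm w p) (lp_space p) (lorentz_space w p)
       \<and> FSS_ops (lorentz_norm w p) (lorentz_norm w p) (lorentz_space w p) (lorentz_space w p)
           = SS_ops (lorentz_norm w p) (lorentz_norm w p) (lorentz_space w p) (lorentz_space w p)"
proof (intro conjI allI impI)
  have DL: "dom_space (lorentz_space w p) (Phi w p) p" by (rule lorentz_dom[OF assms(2) assms(1)])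
  have DP: "dom_space (lp_space p) (Psi p) p" by (rule lp_dom[OF assms(1)])
  fix X Y assume X: "closed_subspace_of (lorentz_norm w p) (lorentz_space w p) X"
    and Y: "closed_subspace_of (lorentz_norm w p) (lorentz_space w p) Y"
  have "SS_ops (lorentz_norm w p) (lorentz_norm w p) X Y \<subseteq> FSS_ops (lorentz_norm w p) (lorentz_norm w p) X Y"
    using SS_sub_FSS[OF DL assms(2), of X Y] X Y unfolding lnorm_eq[symmetric]
    by (auto simp: closed_subspace_of_def)
  thus "FSS_ops (lorentz_norm w p) (lorentz_norm w p) X Y = SS_ops (lorentz_norm w p) (lorentz_norm w p) X Y"
    using FSS_sub_SS by blast
next
  have DL: "dom_space (lorentz_space w p) (Phi w p) p" by (rule lorentz_dom[OF assms(2) assms(1)])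
  have DP: "dom_space (lp_space p) (Psi p) p" by (rule lp_dom[OF assms(1)])
  have "SS_ops (lp_norm p) (lorentz_norm w p) (lp_space p) (lorentz_space w p) \<subseteq> FSS_ops (lp_norm p) (lorentz_norm w p) (lp_space p) (lorentz_space w p)"
    using SS_sub_FSS[OF DP assms(2) order_refl dom_lin[OF DP] order_refl] unfolding lpnorm_eq .
  thus "FSS_ops (lp_norm p) (lorentz_norm w p) (lp_space p) (lorentz_space w p)
           = SS_ops (lp_norm p) (lorentz_norm w p) (lp_space p) (lorentz_space w p)"
    using FSS_sub_SS by blast
next
  have DL: "dom_space (lorentz_space w p) (Phi w p) p" by (rule lorentz_dom[OF assms(2) assms(1)])
  have "SS_ops (lorentz_norm w p) (lorentz_norm w p) (lorentz_space w p) (lorentz_space w p) \<subseteq> FSS_ops (lorentz_norm w p) (lorentz_norm w p) (lorentz_space w p) (lorentz_space w p)"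
    using SS_sub_FSS[OF DL assms(2) order_refl dom_lin[OF DL] order_refl] unfolding lnorm_eq[symmetric] .
  thus "FSS_ops (lorentz_norm w p) (lorentz_norm w p) (lorentz_space w p) (lorentz_space w p)
           = SS_ops (lorentz_norm w p) (lorentz_norm w p) (lorentz_space w p) (lorentz_space w p)"
    using FSS_sub_SS by blast
qed


end
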